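(* Let $p\in\mathbb{C}[y]$ be monic of degree $M\ge1$ with no zeros in $\overline{\mathbb{H}}$. Let $A=\tfrac12(p+\bar p)$, $B=\tfrac1{2i}(p-\bar p)$, fix $t\in\mathbb{R}$, and let $a_1(t),\dots,a_M(t)$ be the (real, simple) roots of $A+tB$. For $1\le\mathfrak{p}\le\infty$ and $j=1,\dots,M$ set $$I_j(t,\mathfrak{p})=\left\|\frac{A+tB}{(\cdot-a_j(t))\,p}\right\|_{L^{\mathfrak{p}}(\mathbb{R},dy/\pi)}.$$ Let $1<\mathfrak{p}<\infty$ and $1/\mathfrak{p}+1/\mathfrak{p}'=1$. Then for every $Q\in\mathbb{C}[y]$ with $\deg Q<M$, $$\|Q/p\|_{L^{\mathfrak{p}}(\mathbb{R},dy/\pi)}\le M^{1/\mathfrak{p}'}\Bigl(\sum_{j=1}^M\Bigl|\frac{Q(a_j(t))}{A'(a_j(t))+tB'(a_j(t))}\Bigr|^{\mathfrak{p}}I_j(t,\mathfrak{p})^{\mathfrak{p}}\Bigr)^{1/\mathfrak{p}}$$ and $$\Bigl(\sum_{j=1}^M\frac{|Q(a_j(t))|^{\mathfrak{p}}}{|A'(a_j(t))+tB'(a_j(t))|^{\mathfrak{p}}}I_j(t,\mathfrak{p})^{\mathfrak{p}}\Bigr)^{1/\mathfrak{p}}\le\|Q/p\|_{L^{\mathfrak{p}}(\mathbb{R},dy/\pi)}\Bigl(\sum_{j=1}^M\frac{|B(a_j(t))|^{\mathfrak{p}}}{|A'(a_j(t))+tB'(a_j(t))|^{\mathfrak{p}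}}I_j(t,\mathfrak{p})^{\mathfrak{p}}I_j(t,\mathfrak{p}')^{\mathfrak{p}}\Bigr)^{1/\mathfrak{p}}.$$
   Context: $\mathbb{H}=\{\operatorname{Im}z>0\}$, $\overline{\mathbb{H}}$ its closure. For a one-variable polynomial, $\bar p(y)=\overline{p(\bar y)}$. Under the hypotheses, $A+tB$ has $M$ simple real roots and $A'+tB'$ is nonzero at them. $L^{\mathfrak{p}}(\mathbb{R},dy/\pi)$ uses the measure $dy/\pi$. *)

theory Defs
  imports "HOL-Analysis.Analysis" "HOL-Computational_Algebra.Polynomial"
begin

text \<open>Conjugate polynomial: coefficients conjugated, i.e. bar p (y) = conj (p (conj y)).\<close>
definition conj_poly :: "complex poly \<Rightarrow> complex poly" where
  "conj_poly p = map_poly cnj p"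

definition polyA :: "complex poly \<Rightarrow> complex poly" where
  "polyA p = smult (1/2) (p + conj_poly p)"

definition polyB :: "complex poly \<Rightarrow> complex poly" where
  "polyB p = smult (1 / (2 * \<i>)) (p - conj_poly p)"

definition Lp_norm_pi :: "real \<Rightarrow> (real \<Rightarrow> complex) \<Rightarrow> real" where
  "Lp_norm_pi r f = (integral\<^sup>L lborel (\<lambda>y. norm (f y) powr r / pi)) powr (1 / r)"

definition Ij :: "complex poly \<Rightarrow> real \<Rightarrow> real \<Rightarrow> real \<Rightarrow> real" where
  "Ij p t a r = Lp_norm_pi r (\<lambda>y. poly (polyA p + smult (of_real t) (polyB p)) (of_real y)
        / ((of_real y - of_real a) * poly p (of_real y)))"

definition real_roots_At :: "complex poly \<Rightarrow> real \<Rightarrow> real set" where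
  "real_roots_At p t = {a::real. poly (polyA p + smult (of_real t) (polyB p)) (of_real a) = 0}"

end

theory Submission
  imports Defs "HOL-Complex_Analysis.Complex_Analysis" "HOL-Computational_Algebra.Fundamental_Theorem_Algebra"
begin

lemma integrable_one_plus_powr_pos:
  fixes s :: real assumes s: "s > 1"
  shows "integrable lborel (\<lambda>y::real. indicator {0..} y * (1 + y) powr (-s))"
proof (rule integrableI_nonneg)
  show "(\<lambda>y::real. indicator {0..} y * (1 + y) powr (-s)) \<in> borel_measurable lborel"
    by measurable
  show "AE x in lborel. 0 \<le> indicator {0..} x * (1 + x) powr - s" by (auto simp: indicator_def)
  define F where "F = (\<lambda>x::real. (1 + x) powr (1 - s) / (1 - s))"
  have FTC: "(\<integral>\<^sup>+x. ennreal ((1 + x) powr (-s)) * indicator {0 ..} x \<partial>lborel) = 0 - F 0"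
  proof (rule nn_integral_FTC_atLeast)
    show "(\<lambda>x::real. (1 + x) powr (-s)) \<in> borel_measurable borel" by measurable
    show "DERIV F x :> (1 + x) powr - s" if "0 \<le> x" for x
    proof -
      have d: "DERIV (\<lambda>x. (1+x) powr (1-s)) x :> (1+x) powr (1-s) * (0 * ln(1+x) + 1*(1-s)/(1+x))"
        by (rule DERIV_powr) (use that in \<open>auto intro!: derivative_eq_intros\<close>)
      have e: "(1+x) powr (1-s) * (0 * ln(1+x) + 1*(1-s)/(1+x)) / (1 - s) = (1 + x) powr - s"
      proof -
        have "(1+x) powr (1-s) = (1+x) * (1+x) powr (-s)"
          using that powr_add[of "1+x" 1 "-s"] by simp
        moreover have "1 - s \<noteq> 0" "1 + x \<noteq> 0" using s that by auto
        moreover have "\<And>a b P l::real. a \<noteq> 0 \<Longrightarrow> b \<noteq> 0 \<Longrightarrow> a * P * (0 * l + 1 * b / a) / b = P"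
          by simp
        ultimately show ?thesis by metis
      qed
      show ?thesis unfolding F_def using DERIV_cdivide[OF d, of "1 - s"] e by simp
    qed
    show "0 \<le> (1 + x) powr - s" for x :: real by simp
    have "((\<lambda>x::real. (1 + x) powr (1 - s)) \<longlongrightarrow> 0) at_top" using s by real_asymp
    then show "(F \<longlongrightarrow> 0) at_top" unfolding F_def by (rule tendsto_divide_zero)
  qed
  then show "(\<integral>\<^sup>+x. ennreal (indicator {0..} x * (1 + x) powr - s) \<partial>lborel) < \<infinity>"
  proof -
    have "(\<integral>\<^sup>+x. ennreal (indicator {0..} x * (1 + x) powr - s) \<partial>lborel)
        = (\<integral>\<^sup>+x. ennreal ((1 + x) powr (-s)) * indicator {0 ..} x \<partial>lborel)"
      by (rule nn_integral_cong) (simp add: indicator_def)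
    then show ?thesis using FTC by simp
  qed
qed

lemma integrable_one_plus_abs_powr:
  fixes s :: real assumes s: "s > 1"
  shows "integrable lborel (\<lambda>y::real. (1 + \<bar>y\<bar>) powr (-s))"
proof -
  let ?phi = "\<lambda>y::real. indicator {0..} y * (1 + y) powr (-s)"
  have i1: "integrable lborel ?phi" by (rule integrable_one_plus_powr_pos[OF s])
  have i2: "integrable lborel (\<lambda>y. ?phi (0 + (-1) * y))"
    by (rule lborel_integrable_real_affine[OF i1]) simp
  have "integrable lborel (\<lambda>y. ?phi y + ?phi (0 + (-1) * y))"
    using i1 i2 by (rule Bochner_Integration.integrable_add)
  then show ?thesis
  proof (rule Bochner_Integration.integrable_bound)
    show "(\<lambda>y::real. (1 + \<bar>y\<bar>) powr (-s)) \<in> borel_measurable lborel" by measurable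
    show "AE x in lborel. norm ((1 + \<bar>x\<bar>) powr - s) \<le> norm (?phi x + ?phi (0 + (-1) * x))"
      by (auto simp: indicator_def)
  qed
qed


lemma integrable_of_bound:
  fixes f :: "real \<Rightarrow> 'a::{banach,second_countable_topology}"
  assumes s: "s > 1" and c: "continuous_on UNIV f"
    and b: "\<And>y. norm (f y) \<le> K * (1 + \<bar>y\<bar>) powr (-s)"
  shows "integrable lborel f"
proof -
  have "integrable lborel (\<lambda>y::real. K * (1 + \<bar>y\<bar>) powr (-s))"
    using integrable_one_plus_abs_powr[OF s] by simp
  then show ?thesis
  proof (rule Bochner_Integration.integrable_bound)
    show "f \<in> borel_measurable lborel" using c by (simp add: borel_measurable_continuous_onI)
    show "AE x in lborel. norm (f x) \<le> norm (K * (1 + \<bar>x\<bar>) powr - s)"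
      using b by (auto intro: order_trans[OF _ abs_ge_self])
  qed
qed

lemma tendsto_interval_integral:
  fixes f :: "real \<Rightarrow> 'b::euclidean_space"
  assumes f: "integrable lborel f"
  shows "(\<lambda>n::nat. integral {-real n..real n} f) \<longlonglongrightarrow> integral\<^sup>L lborel f"
proof -
  have fm: "f \<in> borel_measurable lborel" using f by auto
  have "(\<lambda>n::nat. integral\<^sup>L lborel (\<lambda>y. indicator {-real n..real n} y *\<^sub>R f y)) \<longlonglongrightarrow> integral\<^sup>L lborel f"
  proof (rule integral_dominated_convergence[where w = "\<lambda>y. norm (f y)"])
    show "f \<in> borel_measurable lborel" by fact
    show "(\<lambda>y. indicator {-real n..real n} y *\<^sub>R f y) \<in> borel_measurable lborel" for n
      using fm by measurable
    show "integrable lborel (\<lambda>y. norm (f y))" using f by auto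
    show "AE x in lborel. (\<lambda>n. indicator {- real n..real n} x *\<^sub>R f x) \<longlonglongrightarrow> f x"
    proof (rule AE_I2)
      fix x :: real
      obtain N :: nat where N: "\<bar>x\<bar> \<le> real N" using real_nat_ceiling_ge[of "\<bar>x\<bar>"] by blast
      have "eventually (\<lambda>n. indicator {- real n..real n} x *\<^sub>R f x = f x) sequentially"
        using eventually_ge_at_top[of N]
        by eventually_elim (use N in \<open>auto simp: indicator_def\<close>)
      then show "(\<lambda>n. indicator {- real n..real n} x *\<^sub>R f x) \<longlonglongrightarrow> f x"
        by (rule tendsto_eventually)
    qed
    show "AE x in lborel. norm (indicator {- real n..real n} x *\<^sub>R f x) \<le> norm (f x)" for n
      by (auto simp: indicator_def)
  qed
  moreover have "integral\<^sup>L lborel (\<lambda>y. indicator {-real n..real n} y *\<^sub>R f y) = integral {-real n..real n} f" for n :: nat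
  proof -
    have si: "set_integrable lborel {-real n..real n} f"
      unfolding set_integrable_def
      by (rule Bochner_Integration.integrable_bound[OF f]) (use fm in \<open>auto simp: indicator_def\<close>)
    show ?thesis using set_borel_integral_eq_integral(2)[OF si] by (simp add: set_lebesgue_integral_def)
  qed
  ultimately show ?thesis by simp
qed


lemma poly_upper_bound:
  fixes q :: "complex poly"
  assumes z: "norm z \<ge> 1" and m: "degree q \<le> m"
  shows "norm (poly q z) \<le> (\<Sum>i\<le>degree q. norm (coeff q i)) * norm z ^ m"
proof -
  have "norm (poly q z) = norm (\<Sum>i\<le>degree q. coeff q i * z ^ i)" by (simp add: poly_altdef)
  also have "\<dots> \<le> (\<Sum>i\<le>degree q. norm (coeff q i * z ^ i))" by (rule norm_sum)
  also have "\<dots> \<le> (\<Sum>i\<le>degree q. norm (coeff q i) * norm z ^ m)"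
  proof (rule sum_mono)
    fix i assume "i \<in> {..degree q}"
    then have "i \<le> m" using m by auto
    then have "norm z ^ i \<le> norm z ^ m" using z by (intro power_increasing) auto
    then show "norm (coeff q i * z ^ i) \<le> norm (coeff q i) * norm z ^ m"
      by (simp add: norm_mult norm_power mult_left_mono)
  qed
  also have "\<dots> = (\<Sum>i\<le>degree q. norm (coeff q i)) * norm z ^ m" by (simp add: sum_distrib_right)
  finally show ?thesis .
qed

lemma poly_lower_bound:
  fixes q :: "complex poly"
  assumes q: "q \<noteq> 0"
  shows "\<exists>R c. c > 0 \<and> (\<forall>z. norm z \<ge> R \<longrightarrow> norm (poly q z) \<ge> c * norm z ^ degree q)"
proof (cases "degree q = 0")
  case True
  then obtain a where qa: "q = [:a:]" by (metis degree_eq_zeroE)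
  with q have "a \<noteq> 0" by auto
  then show ?thesis using qa by (intro exI[of _ 0] exI[of _ "norm a"]) auto
next
  case False
  define n where "n = degree q"
  define l where "l = lead_coeff q"
  define q0 where "q0 = q - monom l n"
  have l0: "l \<noteq> 0" using q by (simp add: l_def)
  have dq0: "degree q0 \<le> n - 1"
  proof (rule degree_le)
    show "\<forall>i>n - 1. coeff q0 i = 0"
    proof (intro allI impI)
      fix i assume "i > n - 1"
      then have "i \<ge> n" using False n_def by auto
      then show "coeff q0 i = 0" unfolding q0_def l_def n_def
        by (cases "i = degree q") (auto simp: coeff_monom coeff_eq_0)
    qed
  qed
  define S where "S = (\<Sum>i\<le>degree q0. norm (coeff q0 i))"
  have S0: "S \<ge> 0" unfolding S_def by (auto intro: sum_nonneg)
  define R where "R = max 1 (2 * S / norm l)"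
  show ?thesis
  proof (rule exI[of _ R], rule exI[of _ "norm l / 2"], intro conjI allI impI)
    show "norm l / 2 > 0" using l0 by simp
    fix z :: complex assume zR: "R \<le> norm z"
    then have z1: "norm z \<ge> 1" unfolding R_def by auto
    have zS: "2 * S \<le> norm l * norm z"
      using zR l0 unfolding R_def by (auto simp: field_simps)
    have pq: "poly q z = l * z ^ n + poly q0 z" unfolding q0_def by (simp add: poly_monom)
    have b0: "norm (poly q0 z) \<le> S * norm z ^ (n - 1)"
      unfolding S_def by (rule poly_upper_bound[OF z1 dq0])
    have "norm z ^ n = norm z * norm z ^ (n - 1)"
      using False n_def by (metis Suc_diff_1 bot_nat_0.not_eq_extremum power_Suc)
    then have "2 * (S * norm z ^ (n - 1)) \<le> norm l * norm z ^ n"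
      using zS by (simp add: mult.assoc[symmetric] mult_right_mono)
    moreover have "norm (poly q z) \<ge> norm l * norm z ^ n - norm (poly q0 z)"
      using pq norm_triangle_ineq2[of "l * z ^ n" "- poly q0 z"]
      by (simp add: norm_mult norm_power)
    ultimately show "norm l / 2 * norm z ^ degree q \<le> norm (poly q z)"
      using b0 n_def by simp
  qed
qed

lemma rational_bound:
  fixes N D :: "complex poly" and T :: "complex set" and k :: nat
  assumes D: "D \<noteq> 0" and deg: "degree N + k \<le> degree D"
    and T: "closed T" and nz: "\<And>z. z \<in> T \<Longrightarrow> poly D z \<noteq> 0"
  shows "\<exists>K. \<forall>z\<in>T. norm (poly N z / poly D z) \<le> K / (1 + norm z) ^ k"
proof -
  obtain R0 c where c: "c > 0" and Rc: "\<And>z. norm z \<ge> R0 \<Longrightarrow> norm (poly D z) \<ge> c * norm z ^ degree D"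
    using poly_lower_bound[OF D] by blast
  define R1 where "R1 = max R0 1"
  define SN where "SN = (\<Sum>i\<le>degree N. norm (coeff N i))"
  have SN0: "SN \<ge> 0" unfolding SN_def by (auto intro: sum_nonneg)
  define g where "g = (\<lambda>z. norm (poly N z / poly D z) * (1 + norm z) ^ k)"
  have "compact (T \<inter> cball 0 R1)" using T by (simp add: closed_Int_compact)
  moreover have "continuous_on (T \<inter> cball 0 R1) g"
    unfolding g_def using nz by (auto intro!: continuous_intros)
  ultimately have "compact (g ` (T \<inter> cball 0 R1))" by (simp add: compact_continuous_image)
  then obtain B where B: "\<And>z. z \<in> T \<inter> cball 0 R1 \<Longrightarrow> norm (g z) \<le> B"
    using compact_imp_bounded bounded_iff by (metis imageI)
  define K where "K = max B (SN * 2 ^ k / c)"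
  show ?thesis
  proof (intro exI[of _ K] ballI)
    fix z assume zT: "z \<in> T"
    have pos: "(1 + norm z) ^ k > 0" by (simp add: add_pos_nonneg)
    show "norm (poly N z / poly D z) \<le> K / (1 + norm z) ^ k"
    proof (cases "norm z \<le> R1")
      case True
      then have "g z \<le> B" using B[of z] zT by auto
      then have "g z \<le> K" unfolding K_def by auto
      then show ?thesis using pos unfolding g_def by (simp add: field_simps)
    next
      case False
      then have z1: "norm z \<ge> 1" and zR0: "norm z \<ge> R0" unfolding R1_def by auto
      have zp: "norm z > 0" using z1 by auto
      have Nb: "norm (poly N z) \<le> SN * norm z ^ degree N"
        unfolding SN_def by (rule poly_upper_bound[OF z1]) simp
      have "c * (norm z ^ degree N * norm z ^ k) = c * norm z ^ (degree N + k)"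
        by (simp add: power_add)
      also have "\<dots> \<le> c * norm z ^ degree D"
        using deg z1 c by (intro mult_left_mono power_increasing) auto
      also have "\<dots> \<le> norm (poly D z)" by (rule Rc[OF zR0])
      finally have Db: "c * (norm z ^ degree N * norm z ^ k) \<le> norm (poly D z)" .
      have Dp: "norm (poly D z) > 0"
        using Db c zp by (smt (verit) mult_pos_pos zero_less_power)
      have "norm (poly N z / poly D z) = norm (poly N z) / norm (poly D z)" by (simp add: norm_divide)
      also have "\<dots> \<le> SN * norm z ^ degree N / (c * (norm z ^ degree N * norm z ^ k))"
        using Nb Db Dp c zp SN0 by (intro frac_le) (auto intro!: mult_pos_pos)
      also have "\<dots> = SN / (c * norm z ^ k)" using zp c by (simp add: field_simps)
      also have "\<dots> \<le> SN * 2 ^ k / (c * (1 + norm z) ^ k)"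
      proof -
        have "(1 + norm z) ^ k \<le> (2 * norm z) ^ k" using z1 by (intro power_mono) auto
        then have "(1 + norm z) ^ k \<le> 2 ^ k * norm z ^ k" by (simp add: power_mult_distrib)
        then have le: "c * (1 + norm z) ^ k \<le> c * (2 ^ k * norm z ^ k)" using c by simp
        have eq: "SN / (c * norm z ^ k) = SN * 2 ^ k / (c * (2 ^ k * norm z ^ k))" by simp
        show ?thesis unfolding eq
        proof (rule divide_left_mono[OF le])
          show "0 \<le> SN * 2 ^ k" using SN0 by simp
          have cz: "0 < c * (2 ^ k * norm z ^ k)" using c zp by simp
          show "0 < c * (2 ^ k * norm z ^ k) * (c * (1 + norm z) ^ k)"
            using mult_pos_pos[OF cz mult_pos_pos[OF c pos]] .
        qed
      qed
      also have "\<dots> \<le> K / (1 + norm z) ^ k"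
      proof -
        have "SN * 2 ^ k / (c * (1 + norm z) ^ k) = (SN * 2 ^ k / c) / (1 + norm z) ^ k" by simp
        also have "\<dots> \<le> K / (1 + norm z) ^ k"
          unfolding K_def using pos by (intro divide_right_mono) auto
        finally show ?thesis .
      qed
      finally show ?thesis .
    qed
  qed
qed


lemma upper_halfplane_integral_zero:
  fixes N D :: "complex poly"
  assumes D: "D \<noteq> 0" and deg: "degree N + 2 \<le> degree D"
    and nz: "\<And>z. Im z \<ge> 0 \<Longrightarrow> poly D z \<noteq> 0"
  shows "integrable lborel (\<lambda>y::real. poly N (of_real y) / poly D (of_real y))"
    and "integral\<^sup>L lborel (\<lambda>y::real. poly N (of_real y) / poly D (of_real y)) = 0"
proof -
  define f where "f = (\<lambda>z. poly N z / poly D z)"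
  define H where "H = {z::complex. Im z \<ge> 0}"
  obtain K where K: "\<And>z. z \<in> H \<Longrightarrow> norm (f z) \<le> K / (1 + norm z) ^ 2"
    using rational_bound[OF D deg, of H] nz unfolding H_def f_def
    by (auto simp: closed_halfspace_Im_ge)
  have K0: "K \<ge> 0" using K[of 0] by (simp add: H_def) (smt (verit) norm_ge_zero)
  have cont: "continuous_on UNIV (\<lambda>y::real. f (of_real y))"
    unfolding f_def using nz by (auto intro!: continuous_intros)
  have bnd: "norm (f (of_real y)) \<le> K * (1 + \<bar>y\<bar>) powr (-2)" for y :: real
  proof -
    have "(1 + \<bar>y\<bar>) powr (-2) = 1 / (1 + \<bar>y\<bar>) ^ 2"
      by (simp add: powr_minus powr_realpow divide_inverse)
    then show ?thesis using K[of "of_real y"] by (simp add: H_def)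
  qed
  have int: "integrable lborel (\<lambda>y::real. f (of_real y))"
    by (rule integrable_of_bound[OF _ cont bnd]) simp
  then show "integrable lborel (\<lambda>y::real. poly N (of_real y) / poly D (of_real y))"
    unfolding f_def .
  \<comment> \<open>an open convex neighbourhood of the closed upper half plane without zeros\<close>
  obtain \<epsilon> :: real where eps: "\<epsilon> > 0" and epsz: "\<And>z. Im z > -\<epsilon> \<Longrightarrow> poly D z \<noteq> 0"
  proof (cases "{z. poly D z = 0} = {}")
    case True
    then show ?thesis using that[of 1] by auto
  next
    case False
    define Z where "Z = {z. poly D z = 0}"
    have fin: "finite Z" unfolding Z_def using poly_roots_finite[OF D] .
    have neg: "Im z < 0" if "z \<in> Z" for z using nz[of z] that unfolding Z_def by force
    define m where "m = Max (Im ` Z)"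
    have "m \<in> Im ` Z" unfolding m_def using fin False Z_def by (intro Max_in) auto
    then have m0: "m < 0" using neg by auto
    show ?thesis
    proof (rule that[of "-m"])
      show "-m > 0" using m0 by simp
      fix z assume "Im z > - (- m)"
      moreover have "Im z \<le> m" if "poly D z = 0"
        unfolding m_def using fin that Z_def by (intro Max_ge) auto
      ultimately show "poly D z \<noteq> 0" by force
    qed
  qed
  define S where "S = {z::complex. Im z > -\<epsilon>}"
  have HS: "H \<subseteq> S" unfolding H_def S_def using eps by auto
  have holo: "f holomorphic_on S" unfolding f_def S_def using epsz by (auto intro!: holomorphic_intros)
  have oS: "open S" unfolding S_def by (rule open_halfspace_Im_gt)
  have cS: "convex S" unfolding S_def by (rule convex_halfspace_Im_gt)
  have est: "norm (integral {-real n..real n} (\<lambda>y. f (of_real y))) \<le> K * pi / real n"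
    if n: "n \<ge> 1" for n :: nat
  proof -
    define R where "R = real n"
    have R: "R > 0" using n unfolding R_def by simp
    define g1 where "g1 = linepath (- complex_of_real R) (complex_of_real R)"
    define g2 where "g2 = part_circlepath 0 R 0 pi"
    have v1: "valid_path g1" unfolding g1_def by simp
    have v2: "valid_path g2" unfolding g2_def by simp
    have i1: "path_image g1 \<subseteq> H"
      unfolding g1_def H_def path_image_linepath by (intro closed_segment_subset convex_halfspace_Im_ge) auto
    have i2: "path_image g2 \<subseteq> H"
    proof
      fix w assume "w \<in> path_image g2"
      then obtain x where x: "0 \<le> x" "x \<le> pi" and w: "w = 0 + R * exp (\<i> * of_real x)"
        unfolding g2_def using path_image_part_circlepath[of 0 pi 0 R] by auto
      have "Im w = R * sin x" unfolding w by (simp add: Im_exp)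
      moreover have "sin x \<ge> 0" using x by (simp add: sin_ge_zero)
      ultimately show "w \<in> H" unfolding H_def using R by simp
    qed
    have ci1: "f contour_integrable_on g1"
      using contour_integrable_holomorphic_simple[OF holo oS v1] i1 HS by blast
    have ci2: "f contour_integrable_on g2"
      using contour_integrable_holomorphic_simple[OF holo oS v2] i2 HS by blast
    have "(f has_contour_integral 0) (g1 +++ g2)"
    proof (rule Cauchy_theorem_convex_simple[OF holo cS])
      show "valid_path (g1 +++ g2)" using v1 v2 unfolding g1_def g2_def by (auto intro!: valid_path_join)
      show "path_image (g1 +++ g2) \<subseteq> S"
        using i1 i2 HS path_image_join_subset by blast
      show "pathfinish (g1 +++ g2) = pathstart (g1 +++ g2)"
        unfolding g1_def g2_def by simp
    qed
    moreover have "(f has_contour_integral (contour_integral g1 f + contour_integral g2 f)) (g1 +++ g2)"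
      using has_contour_integral_join[OF has_contour_integral_integral[OF ci1]
              has_contour_integral_integral[OF ci2] v1 v2] .
    ultimately have sum0: "contour_integral g1 f + contour_integral g2 f = 0"
      using has_contour_integral_unique by blast
    have "contour_integral g1 f = integral {Re (- complex_of_real R)..Re (complex_of_real R)} (\<lambda>x. f (of_real x))"
      unfolding g1_def by (rule contour_integral_linepath_Reals_eq) (use R in auto)
    then have eq1: "contour_integral g1 f = integral {-real n..real n} (\<lambda>x. f (of_real x))"
      unfolding R_def by simp
    have "norm (contour_integral g2 f) \<le> K / (1 + R) ^ 2 * R * \<bar>pi - 0\<bar>"
      unfolding g2_def
    proof (rule contour_integral_bound_part_circlepath)
      show "f contour_integrable_on part_circlepath 0 R 0 pi" using ci2 unfolding g2_def .
      show "0 \<le> K / (1 + R) ^ 2" using K0 R by simp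
      show "0 \<le> R" using R by simp
      fix x assume x: "x \<in> path_image (part_circlepath 0 R 0 pi)"
      then have "norm x = R" using in_path_image_part_circlepath[OF x] R by simp
      moreover have "x \<in> H" using i2 x unfolding g2_def by auto
      ultimately show "norm (f x) \<le> K / (1 + R) ^ 2" using K[of x] by simp
    qed
    also have "\<dots> \<le> K * pi / R"
    proof -
      have "R * R \<le> (1 + R) ^ 2" using R by (simp add: power2_eq_square algebra_simps)
      then have "K * R * pi / (1 + R) ^ 2 \<le> K * R * pi / (R * R)"
        using R K0 by (intro divide_left_mono) (auto intro!: mult_nonneg_nonneg mult_pos_pos)
      also have "\<dots> = K * pi / R" using R by (simp add: field_simps)
      finally show ?thesis by (simp add: mult.commute mult.left_commute)
    qed
    finally have "norm (contour_integral g2 f) \<le> K * pi / R" .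
    moreover have "contour_integral g1 f = - contour_integral g2 f" using sum0 by (simp add: eq_neg_iff_add_eq_0)
    ultimately show ?thesis using eq1 unfolding R_def by simp
  qed
  have lim1: "(\<lambda>n::nat. integral {-real n..real n} (\<lambda>y. f (of_real y))) \<longlonglongrightarrow> integral\<^sup>L lborel (\<lambda>y. f (of_real y))"
    by (rule tendsto_interval_integral[OF int])
  have lim2: "(\<lambda>n::nat. integral {-real n..real n} (\<lambda>y. f (of_real y))) \<longlonglongrightarrow> 0"
  proof (rule Lim_null_comparison)
    show "\<forall>\<^sub>F n in sequentially. norm (integral {-real n..real n} (\<lambda>y. f (of_real y))) \<le> K * pi / real n"
      using eventually_ge_at_top[of "1::nat"] by eventually_elim (rule est)
    show "(\<lambda>n. K * pi / real n) \<longlonglongrightarrow> 0"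
      by (intro tendsto_divide_0[OF tendsto_const] filterlim_at_top_imp_at_infinity filterlim_real_sequentially)
  qed
  show "integral\<^sup>L lborel (\<lambda>y::real. poly N (of_real y) / poly D (of_real y)) = 0"
    using LIMSEQ_unique[OF lim1 lim2] unfolding f_def .
qed


lemma lower_halfplane_integral_zero:
  fixes N D :: "complex poly"
  assumes D: "D \<noteq> 0" and deg: "degree N + 2 \<le> degree D"
    and nz: "\<And>z. Im z \<le> 0 \<Longrightarrow> poly D z \<noteq> 0"
  shows "integrable lborel (\<lambda>y::real. poly N (of_real y) / poly D (of_real y))"
    and "integral\<^sup>L lborel (\<lambda>y::real. poly N (of_real y) / poly D (of_real y)) = 0"
proof -
  define N' where "N' = pcompose N [:0, -1:]"
  define D' where "D' = pcompose D [:0, -1:]"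
  have pN: "poly N' z = poly N (- z)" for z unfolding N'_def by (simp add: poly_pcompose)
  have pD: "poly D' z = poly D (- z)" for z unfolding D'_def by (simp add: poly_pcompose)
  have D'0: "D' \<noteq> 0" unfolding D'_def using D pcompose_eq_0[of D "[:0, -1:]"] by auto
  have deg': "degree N' + 2 \<le> degree D'" unfolding N'_def D'_def using deg by (simp add: degree_pcompose)
  have nz': "\<And>z. Im z \<ge> 0 \<Longrightarrow> poly D' z \<noteq> 0" unfolding pD using nz by simp
  note U = upper_halfplane_integral_zero[OF D'0 deg' nz']
  let ?f = "\<lambda>y::real. poly N (of_real y) / poly D (of_real y)"
  have eqf: "(\<lambda>y::real. poly N' (of_real y) / poly D' (of_real y)) = (\<lambda>y. ?f (0 + (-1) * y))"
    unfolding pN pD by simp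
  have "integrable lborel (\<lambda>y. ?f (0 + (-1) * y))" using U(1) eqf by simp
  then show "integrable lborel ?f" using lborel_integrable_real_affine_iff[of "-1" ?f 0] by simp
  have "integral\<^sup>L lborel ?f = \<bar>-1\<bar> *\<^sub>R integral\<^sup>L lborel (\<lambda>y. ?f (0 + (-1) * y))"
    by (rule lborel_integral_real_affine) simp
  then show "integral\<^sup>L lborel ?f = 0" using U(2) eqf by simp
qed

lemma integral_inv_one_plus_sq:
  fixes c :: complex
  shows "integrable lborel (\<lambda>y::real. c / (of_real y ^ 2 + 1))"
    and "integral\<^sup>L lborel (\<lambda>y::real. c / (of_real y ^ 2 + 1)) = c * pi"
proof -
  let ?g = "\<lambda>y::real. 1 / (y ^ 2 + 1)"
  have nz1: "y ^ 2 + 1 \<noteq> 0" for y :: real by (smt (verit) zero_le_power2)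
  have cont: "continuous_on UNIV ?g" using nz1 by (auto intro!: continuous_intros)
  have bnd: "norm (?g y) \<le> 2 * (1 + \<bar>y\<bar>) powr (-2)" for y :: real
  proof -
    have e: "(1 + \<bar>y\<bar>) powr (-2) = 1 / (1 + \<bar>y\<bar>) ^ 2"
      by (simp add: powr_minus powr_realpow divide_inverse)
    have le: "(1 + \<bar>y\<bar>) ^ 2 \<le> 2 * (y ^ 2 + 1)"
    proof -
      have "0 \<le> (\<bar>y\<bar> - 1) ^ 2" by simp
      then show ?thesis by (simp add: power2_eq_square algebra_simps)
    qed
    have p1: "y ^ 2 + 1 > 0" by (smt (verit) zero_le_power2)
    have p2: "(1 + \<bar>y\<bar>) ^ 2 > 0" by (simp add: add_pos_nonneg)
    have "1 / (y ^ 2 + 1) \<le> 2 / (1 + \<bar>y\<bar>) ^ 2"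
    proof -
      have aux: "\<And>A B::real. A > 0 \<Longrightarrow> B > 0 \<Longrightarrow> B \<le> 2 * A \<Longrightarrow> 1 / A \<le> 2 / B"
        by (simp add: field_simps)
      show ?thesis by (rule aux[OF p1 p2 le])
    qed
    then show ?thesis using p1 unfolding e by simp
  qed
  have gi: "integrable lborel ?g" by (rule integrable_of_bound[OF _ cont bnd]) simp
  have lim: "(\<lambda>n::nat. integral {-real n..real n} ?g) \<longlonglongrightarrow> integral\<^sup>L lborel ?g"
    by (rule tendsto_interval_integral[OF gi])
  have ival: "integral {-real n..real n} ?g = 2 * arctan (real n)" for n :: nat
  proof -
    have "(?g has_integral (arctan (real n) - arctan (- real n))) {-real n..real n}"
    proof (rule fundamental_theorem_of_calculus)
      show "- real n \<le> real n" by simp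
      fix x assume "x \<in> {-real n..real n}"
      have "(arctan has_real_derivative inverse (1 + x\<^sup>2)) (at x within {-real n..real n})"
        using DERIV_arctan by (rule has_field_derivative_at_within)
      then show "(arctan has_vector_derivative ?g x) (at x within {-real n..real n})"
        by (simp add: has_real_derivative_iff_has_vector_derivative[symmetric] divide_inverse add.commute)
    qed
    then show ?thesis by (simp add: integral_unique arctan_minus)
  qed
  have "(\<lambda>n::nat. 2 * arctan (real n)) \<longlonglongrightarrow> 2 * (pi / 2)"
    by (intro tendsto_mult tendsto_const filterlim_compose[OF tendsto_arctan_at_top filterlim_real_sequentially])
  then have gv: "integral\<^sup>L lborel ?g = pi" using LIMSEQ_unique[OF lim] ival by simp
  have eq: "(\<lambda>y::real. c / (of_real y ^ 2 + 1)) = (\<lambda>y. c * complex_of_real (?g y))"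
    by (auto simp: fun_eq_iff)
  have ci: "integrable lborel (\<lambda>y. complex_of_real (?g y))"
    using gi by (rule integrable_of_real)
  show "integrable lborel (\<lambda>y::real. c / (of_real y ^ 2 + 1))"
    unfolding eq using ci by (rule integrable_mult_right)
  show "integral\<^sup>L lborel (\<lambda>y::real. c / (of_real y ^ 2 + 1)) = c * pi"
  proof -
    have "integral\<^sup>L lborel (\<lambda>y::real. c / (of_real y ^ 2 + 1))
        = integral\<^sup>L lborel (\<lambda>y. c * complex_of_real (?g y))" by (simp only: eq)
    also have "\<dots> = c * integral\<^sup>L lborel (\<lambda>y. complex_of_real (?g y))"
      by (rule integral_mult_right_zero)
    also have "\<dots> = c * complex_of_real (integral\<^sup>L lborel ?g)"
      by (simp only: integral_complex_of_real)
    finally show ?thesis using gv by simp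
  qed
qed

lemma holder:
  fixes f g :: "real \<Rightarrow> real" and p q :: real
  assumes p: "p > 1" and q: "q > 1" and pq: "1/p + 1/q = 1"
    and fm: "f \<in> borel_measurable lborel" and gm: "g \<in> borel_measurable lborel"
    and f0: "\<And>x. f x \<ge> 0" and g0: "\<And>x. g x \<ge> 0"
    and fi: "integrable lborel (\<lambda>x. f x powr p)" and gi: "integrable lborel (\<lambda>x. g x powr q)"
  shows "integrable lborel (\<lambda>x. f x * g x)"
    and "integral\<^sup>L lborel (\<lambda>x. f x * g x) \<le>
           (integral\<^sup>L lborel (\<lambda>x. f x powr p)) powr (1/p) * (integral\<^sup>L lborel (\<lambda>x. g x powr q)) powr (1/q)"
proof -
  have young: "f x * g x \<le> f x powr p / p + g x powr q / q" for x
    by (rule Youngs_inequality[OF p q pq f0 g0])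
  have si: "integrable lborel (\<lambda>x. f x powr p / p + g x powr q / q)"
    using fi gi by auto
  show fgi: "integrable lborel (\<lambda>x. f x * g x)"
  proof (rule Bochner_Integration.integrable_bound[OF si])
    show "(\<lambda>x. f x * g x) \<in> borel_measurable lborel" using fm gm by simp
    have "norm (f x * g x) \<le> norm (f x powr p / p + g x powr q / q)" for x
    proof -
      have "norm (f x * g x) = f x * g x" using f0[of x] g0[of x] by simp
      also have "\<dots> \<le> f x powr p / p + g x powr q / q" by (rule young)
      also have "\<dots> \<le> norm (f x powr p / p + g x powr q / q)" by simp
      finally show ?thesis .
    qed
    then show "AE x in lborel. norm (f x * g x) \<le> norm (f x powr p / p + g x powr q / q)" by simp
  qed
  define A where "A = integral\<^sup>L lborel (\<lambda>x. f x powr p)"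
  define B where "B = integral\<^sup>L lborel (\<lambda>x. g x powr q)"
  have A0: "A \<ge> 0" unfolding A_def by (rule integral_nonneg_AE) simp
  have B0: "B \<ge> 0" unfolding B_def by (rule integral_nonneg_AE) simp
  have rhs0: "0 \<le> A powr (1/p) * B powr (1/q)" by simp
  show "integral\<^sup>L lborel (\<lambda>x. f x * g x) \<le> A powr (1/p) * B powr (1/q)"
    unfolding A_def[symmetric] B_def[symmetric]
  proof (cases "A = 0 \<or> B = 0")
    case True
    then have ae0: "AE x in lborel. f x * g x = 0"
    proof
      assume "A = 0"
      then have "AE x in lborel. f x powr p = 0"
        using integral_nonneg_eq_0_iff_AE[OF fi] unfolding A_def by simp
      then show ?thesis by eventually_elim simp
    next
      assume "B = 0"
      then have "AE x in lborel. g x powr q = 0"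
        using integral_nonneg_eq_0_iff_AE[OF gi] unfolding B_def by simp
      then show ?thesis by eventually_elim simp
    qed
    have "integral\<^sup>L lborel (\<lambda>x. f x * g x) = 0"
      using ae0 by (rule integral_eq_zero_AE)
    then show ?thesis using rhs0 by simp
  next
    case False
    then have Ap: "A > 0" and Bp: "B > 0" using A0 B0 by auto
    define a where "a = A powr (1/p)"
    define b where "b = B powr (1/q)"
    have ap: "a > 0" and bp: "b > 0" unfolding a_def b_def using Ap Bp by auto
    have apow: "a powr p = A" unfolding a_def using Ap p by (simp add: powr_powr)
    have bpow: "b powr q = B" unfolding b_def using Bp q by (simp add: powr_powr)
    have pt: "f x * g x / (a * b) \<le> f x powr p / (p * A) + g x powr q / (q * B)" for x
    proof -
      have "(f x / a) * (g x / b) \<le> (f x / a) powr p / p + (g x / b) powr q / q"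
        using f0 g0 ap bp by (intro Youngs_inequality[OF p q pq]) auto
      moreover have "(f x / a) powr p = f x powr p / A" using f0[of x] ap apow by (simp add: powr_divide)
      moreover have "(g x / b) powr q = g x powr q / B" using g0[of x] bp bpow by (simp add: powr_divide)
      ultimately show ?thesis by (simp add: field_simps)
    qed
    have "integral\<^sup>L lborel (\<lambda>x. f x * g x / (a * b)) \<le>
          integral\<^sup>L lborel (\<lambda>x. f x powr p / (p * A) + g x powr q / (q * B))"
      by (rule integral_mono) (use fgi fi gi pt in auto)
    also have "\<dots> = A / (p * A) + B / (q * B)"
      using fi gi unfolding A_def B_def by simp
    also have "\<dots> = 1" using Ap Bp p q pq by simp
    finally have "integral\<^sup>L lborel (\<lambda>x. f x * g x) / (a * b) \<le> 1" by simp
    then show ?thesis using ap bp pos_divide_le_eq[of "a * b"] unfolding a_def b_def by simp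
  qed
qed

lemma power_mean_pos:
  fixes x :: "'a \<Rightarrow> real" and r :: real
  assumes fin: "finite A" and ne: "A \<noteq> {}" and pos: "\<And>a. a \<in> A \<Longrightarrow> x a > 0" and r: "r \<ge> 1"
  shows "(\<Sum>a\<in>A. x a) powr r \<le> real (card A) powr (r - 1) * (\<Sum>a\<in>A. x a powr r)"
proof -
  define n where "n = real (card A)"
  have n: "n > 0" unfolding n_def using fin ne by (simp add: card_gt_0_iff)
  have "(\<lambda>z. z powr r) (\<Sum>a\<in>A. (1/n) *\<^sub>R x a) \<le> (\<Sum>a\<in>A. (1/n) * (\<lambda>z. z powr r) (x a))"
    using fin ne powr_convex[OF r] by (rule convex_on_sum) (use pos n in \<open>auto simp: n_def\<close>)
  then have "((\<Sum>a\<in>A. x a) / n) powr r \<le> (\<Sum>a\<in>A. x a powr r) / n"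
    by (simp add: sum_divide_distrib[symmetric] sum_distrib_left[symmetric] divide_inverse mult.commute)
  moreover have "((\<Sum>a\<in>A. x a) / n) powr r = (\<Sum>a\<in>A. x a) powr r / n powr r"
    using pos n by (auto intro!: powr_divide sum_nonneg less_imp_le)
  ultimately have "(\<Sum>a\<in>A. x a) powr r \<le> n powr r * ((\<Sum>a\<in>A. x a powr r) / n)"
    using n by (simp add: field_simps)
  also have "\<dots> = n powr (r - 1) * (\<Sum>a\<in>A. x a powr r)"
    using n by (simp add: powr_diff field_simps)
  finally show ?thesis unfolding n_def .
qed

lemma power_mean:
  fixes x :: "'a \<Rightarrow> complex" and r :: real
  assumes fin: "finite A" and r: "r \<ge> 1" and M: "card A \<le> M"
  shows "norm (\<Sum>a\<in>A. x a) powr r \<le> real M powr (r - 1) * (\<Sum>a\<in>A. norm (x a) powr r)"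
proof -
  define A' where "A' = {a\<in>A. x a \<noteq> 0}"
  have finA': "finite A'" using fin unfolding A'_def by simp
  have sA: "(\<Sum>a\<in>A. x a) = (\<Sum>a\<in>A'. x a)" unfolding A'_def
    by (rule sum.mono_neutral_right[OF fin]) auto
  have sA2: "(\<Sum>a\<in>A. norm (x a) powr r) = (\<Sum>a\<in>A'. norm (x a) powr r)" unfolding A'_def
    by (rule sum.mono_neutral_right[OF fin]) auto
  show ?thesis
  proof (cases "A' = {}")
    case True
    then show ?thesis using sA by (simp add: sum_nonneg)
  next
    case False
    have "norm (\<Sum>a\<in>A'. x a) powr r \<le> (\<Sum>a\<in>A'. norm (x a)) powr r"
      using r by (intro powr_mono2) (auto intro: norm_sum)
    also have "\<dots> \<le> real (card A') powr (r - 1) * (\<Sum>a\<in>A'. norm (x a) powr r)"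
      by (rule power_mean_pos[OF finA' False _ r]) (auto simp: A'_def)
    also have "\<dots> \<le> real M powr (r - 1) * (\<Sum>a\<in>A'. norm (x a) powr r)"
    proof (rule mult_right_mono)
      have "card A' \<le> card A" unfolding A'_def using fin by (intro card_mono) auto
      then have "real (card A') \<le> real M" using M by simp
      moreover have "card A' > 0" using finA' False by (simp add: card_gt_0_iff)
      ultimately show "real (card A') powr (r - 1) \<le> real M powr (r - 1)"
        using r by (intro powr_mono2) auto
    qed (auto intro: sum_nonneg)
    finally show ?thesis using sA sA2 by simp
  qed
qed


lemma coeff_conj_poly: "coeff (conj_poly p) n = cnj (coeff p n)"
  unfolding conj_poly_def by (simp add: coeff_map_poly)

lemma degree_conj_poly [simp]: "degree (conj_poly p) = degree p"
  unfolding conj_poly_def by (rule degree_map_poly) simp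

lemma poly_conj_poly: "poly (conj_poly p) z = cnj (poly p (cnj z))"
  unfolding conj_poly_def by simp

lemma pderiv_conj_poly: "pderiv (conj_poly p) = conj_poly (pderiv p)"
  by (rule poly_eqI) (simp add: coeff_pderiv coeff_conj_poly)

lemma F_eq:
  "polyA p + smult (of_real t) (polyB p)
     = smult ((1 - \<i> * of_real t) / 2) p + smult ((1 + \<i> * of_real t) / 2) (conj_poly p)"
  by (rule poly_eqI) (simp add: polyA_def polyB_def coeff_conj_poly field_simps)

lemma cmod_cnj_lt:
  fixes a w :: complex
  assumes a: "Im a < 0" and w: "Im w > 0"
  shows "norm (a - cnj w) < norm (a - w)"
proof -
  have e1: "(norm (a - cnj w))\<^sup>2 = (Re a - Re w)\<^sup>2 + (Im a + Im w)\<^sup>2" by (simp add: cmod_power2)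
  have e2: "(norm (a - w))\<^sup>2 = (Re a - Re w)\<^sup>2 + (Im a - Im w)\<^sup>2" by (simp add: cmod_power2)
  have "Im a * Im w < 0" using a w by (simp add: mult_neg_pos)
  then have "(Im a + Im w)\<^sup>2 < (Im a - Im w)\<^sup>2" by (simp add: power2_eq_square algebra_simps)
  then have "(norm (a - cnj w))\<^sup>2 < (norm (a - w))\<^sup>2" unfolding e1 e2 by simp
  then show ?thesis by (simp add: power2_less_imp_less)
qed

lemma Im_inverse_lt:
  fixes x :: complex assumes "Im x > 0" shows "Im (inverse x) < 0"
proof -
  have "x \<noteq> 0" using assms by auto
  have "(Re x)\<^sup>2 + (Im x)\<^sup>2 > 0" using assms by (simp add: sum_power2_gt_zero_iff)
  then have "Im x / ((Re x)\<^sup>2 + (Im x)\<^sup>2) > 0" using assms by (simp add: divide_pos_pos)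
  then show ?thesis by (simp add: inverse_eq_divide Im_divide)
qed

lemma stable_poly:
  fixes p :: "complex poly"
  assumes "p \<noteq> 0" and "\<And>z. poly p z = 0 \<Longrightarrow> Im z < 0"
  shows "(\<forall>w. Im w > 0 \<longrightarrow> norm (poly p (cnj w)) \<le> norm (poly p w)
               \<and> (degree p > 0 \<longrightarrow> norm (poly p (cnj w)) < norm (poly p w)))
       \<and> (\<forall>z. Im z = 0 \<longrightarrow> Im (poly (pderiv p) z / poly p z) \<le> 0
               \<and> (degree p > 0 \<longrightarrow> Im (poly (pderiv p) z / poly p z) < 0))"
  using assms
proof (induction p rule: poly_root_induct[where P = "\<lambda>a. Im a < 0"])
  case 0
  then show ?case by simp
next
  case (no_roots p)
  have "degree p = 0"
  proof (rule ccontr)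
    assume "degree p \<noteq> 0"
    then have "\<not> constant (poly p)" by (simp add: constant_degree)
    then obtain z where "poly p z = 0" using fundamental_theorem_of_algebra by blast
    with no_roots show False by blast
  qed
  then obtain c where pc: "p = [:c:]" by (metis degree_eq_zeroE)
  then show ?case by simp
next
  case (root a p)
  define q where "q = [:a, -1:] * p"
  have p0: "p \<noteq> 0" using root.prems by auto
  have pr: "Im z < 0" if "poly p z = 0" for z using root.prems(2)[of z] that by simp
  note IH = root.IH[OF p0 pr]
  have pq: "poly ([:a, -1:] * p) z = (a - z) * poly p z" for z by (simp add: algebra_simps)
  have A: "norm (poly ([:a, -1:] * p) (cnj w)) < norm (poly ([:a, -1:] * p) w)" if w: "Im w > 0" for w
  proof -
    have pw: "poly p w \<noteq> 0" using pr[of w] w by auto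
    have "norm (poly ([:a, -1:] * p) (cnj w)) = norm (a - cnj w) * norm (poly p (cnj w))"
      by (simp only: pq norm_mult)
    also have "\<dots> \<le> norm (a - cnj w) * norm (poly p w)"
      using IH w by (intro mult_left_mono) auto
    also have "\<dots> < norm (a - w) * norm (poly p w)"
      using cmod_cnj_lt[OF root.hyps w] pw by (intro mult_strict_right_mono) auto
    also have "\<dots> = norm (poly ([:a, -1:] * p) w)" by (simp only: pq norm_mult)
    finally show ?thesis .
  qed
  have B: "Im (poly (pderiv ([:a, -1:] * p)) z / poly ([:a, -1:] * p) z) < 0" if z: "Im z = 0" for z
  proof -
    have pz: "poly p z \<noteq> 0" using pr[of z] z by auto
    have az: "a - z \<noteq> 0" using root.hyps z by auto
    have d: "poly (pderiv ([:a, -1:] * p)) z = - poly p z + (a - z) * poly (pderiv p) z"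
    proof -
      have "pderiv ([:a, -1:] * p) = [:a, -1:] * pderiv p + p * pderiv [:a, -1:]" by (rule pderiv_mult)
      moreover have "pderiv [:a, -1:] = [:-1:]" by (simp add: pderiv_pCons)
      ultimately have "poly (pderiv ([:a, -1:] * p)) z = poly [:a, -1:] z * poly (pderiv p) z + poly p z * poly [:-1:] z"
        by (simp only: poly_add poly_mult)
      then show ?thesis by (simp add: algebra_simps del: mult_pCons_left)
    qed
    have "poly (pderiv ([:a, -1:] * p)) z / poly ([:a, -1:] * p) z
          = inverse (z - a) + poly (pderiv p) z / poly p z"
      using pz az unfolding d pq by (simp add: field_simps)
    moreover have "Im (inverse (z - a)) < 0" using root.hyps z by (intro Im_inverse_lt) simp
    moreover have "Im (poly (pderiv p) z / poly p z) \<le> 0" using IH z by auto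
    ultimately show ?thesis by simp
  qed
  show ?case using A B less_imp_le by blast
qed

lemma F_facts:
  fixes p :: "complex poly" and t :: real and M :: nat
  assumes monic: "lead_coeff p = 1" and degp: "degree p = M" and M1: "M \<ge> 1"
    and nozero: "\<forall>z. Im z \<ge> 0 \<longrightarrow> poly p z \<noteq> 0"
  defines "F \<equiv> polyA p + smult (of_real t) (polyB p)"
  shows "degree F = M" and "lead_coeff F = 1"
    and "\<And>z. poly F z = 0 \<Longrightarrow> Im z = 0"
    and "\<And>z. poly F z = 0 \<Longrightarrow> poly (pderiv F) z \<noteq> 0"
    and "card {z. poly F z = 0} = M"
    and "of_real ` real_roots_At p t = {z. poly F z = 0}"
    and "finite (real_roots_At p t)" and "card (real_roots_At p t) = M"
proof -
  define u where "u = (1 - \<i> * of_real t) / (2::complex)"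
  define v where "v = (1 + \<i> * of_real t) / (2::complex)"
  have Feq: "F = smult u p + smult v (conj_poly p)" unfolding F_def u_def v_def by (rule F_eq)
  have uv: "u + v = 1" unfolding u_def v_def by (simp add: field_simps)
  have ucnj: "u = cnj v" unfolding u_def v_def by (simp add: complex_eq_iff)
  have v0: "v \<noteq> 0" unfolding v_def by (simp add: complex_eq_iff)
  have u0: "u \<noteq> 0" using v0 ucnj by simp
  have nuv: "norm u = norm v" using ucnj by simp
  have p0: "p \<noteq> 0" using monic by auto
  have proots: "Im z < 0" if "poly p z = 0" for z using nozero that not_le by blast
  have st: "(\<forall>w. Im w > 0 \<longrightarrow> norm (poly p (cnj w)) \<le> norm (poly p w)
               \<and> (degree p > 0 \<longrightarrow> norm (poly p (cnj w)) < norm (poly p w)))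
       \<and> (\<forall>z. Im z = 0 \<longrightarrow> Im (poly (pderiv p) z / poly p z) \<le> 0
               \<and> (degree p > 0 \<longrightarrow> Im (poly (pderiv p) z / poly p z) < 0))"
    by (rule stable_poly[OF p0]) (rule proots)
  have dpos: "degree p > 0" using degp M1 by simp
  have cF: "coeff F n = u * coeff p n + v * cnj (coeff p n)" for n
    by (simp add: Feq coeff_conj_poly)
  have "degree F \<le> M"
    by (rule degree_le) (auto simp: cF degp coeff_eq_0)
  moreover have "coeff F M = 1" using monic degp uv by (simp add: cF)
  moreover then have "M \<le> degree F" by (intro le_degree) simp
  ultimately show dF: "degree F = M" and lF: "lead_coeff F = 1" by auto
  have F0: "F \<noteq> 0" using lF by auto
  have pF: "poly F z = u * poly p z + v * cnj (poly p (cnj z))" for z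
    by (simp add: Feq poly_conj_poly)
  show real: "Im z = 0" if Fz: "poly F z = 0" for z
  proof (rule ccontr)
    assume nz: "Im z \<noteq> 0"
    have "u * poly p z = - (v * cnj (poly p (cnj z)))" using Fz pF[of z] by (simp add: eq_neg_iff_add_eq_0)
    then have "norm u * norm (poly p z) = norm v * norm (poly p (cnj z))" by (metis norm_minus_cancel norm_mult complex_mod_cnj)
    then have eqn: "norm (poly p z) = norm (poly p (cnj z))" using nuv v0 by simp
    show False
    proof (cases "Im z > 0")
      case True
      then show False using st dpos eqn by force
    next
      case False
      then have "Im (cnj z) > 0" using nz by simp
      then have "norm (poly p (cnj (cnj z))) < norm (poly p (cnj z))" using st dpos by blast
      then have "norm (poly p z) < norm (poly p (cnj z))" by simp
      then show False using eqn by simp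
    qed
  qed
  show simple: "poly (pderiv F) z \<noteq> 0" if Fz: "poly F z = 0" for z
  proof
    assume F'z: "poly (pderiv F) z = 0"
    have z: "Im z = 0" by (rule real[OF Fz])
    then have cz: "cnj z = z" by (simp add: complex_eq_iff)
    have pz: "poly p z \<noteq> 0" using nozero z by simp
    have dF: "pderiv F = smult u (pderiv p) + smult v (conj_poly (pderiv p))"
      by (simp add: Feq pderiv_add pderiv_smult pderiv_conj_poly)
    have e1: "v * cnj (poly p z) = - u * poly p z" using Fz pF[of z] cz by (simp add: algebra_simps eq_neg_iff_add_eq_0)
    have e2: "v * cnj (poly (pderiv p) z) = - u * poly (pderiv p) z"
      using F'z cz by (simp add: dF poly_conj_poly algebra_simps eq_neg_iff_add_eq_0)
    define \<rho> where "\<rho> = poly (pderiv p) z / poly p z"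
    have "cnj \<rho> = (v * cnj (poly (pderiv p) z)) / (v * cnj (poly p z))"
      unfolding \<rho>_def using v0 by simp
    also have "\<dots> = \<rho>" unfolding e1 e2 \<rho>_def using u0 by simp
    finally have "Im (cnj \<rho>) = Im \<rho>" by simp
    then have "Im \<rho> = 0" by simp
    moreover have "Im \<rho> < 0" unfolding \<rho>_def using st dpos z by blast
    ultimately show False by simp
  qed
  have rsf: "rsquarefree F" unfolding rsquarefree_roots using simple by blast
  have fin: "finite {z. poly F z = 0}" by (rule poly_roots_finite[OF F0])
  have "smult (lead_coeff F) (\<Prod>z|poly F z = 0. [:-z, 1:]) = F"
    by (rule complex_poly_decompose_rsquarefree[OF rsf])
  then have "degree F = degree (\<Prod>z|poly F z = 0. [:-z, 1:])" using lF by simp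
  also have "\<dots> = (\<Sum>z|poly F z = 0. degree [:-z, 1:])"
    by (rule degree_prod_sum_eq) simp
  also have "\<dots> = card {z. poly F z = 0}" by simp
  finally show cardZ: "card {z. poly F z = 0} = M" using dF by simp
  show img: "of_real ` real_roots_At p t = {z. poly F z = 0}"
  proof
    show "of_real ` real_roots_At p t \<subseteq> {z. poly F z = 0}"
      unfolding real_roots_At_def F_def by auto
    show "{z. poly F z = 0} \<subseteq> of_real ` real_roots_At p t"
    proof
      fix z assume "z \<in> {z. poly F z = 0}"
      then have Fz: "poly F z = 0" by simp
      then have "z = of_real (Re z)" using real[OF Fz] by (simp add: complex_eq_iff)
      moreover have "Re z \<in> real_roots_At p t"
        unfolding real_roots_At_def using Fz \<open>z = of_real (Re z)\<close> unfolding F_def by (metis (mono_tags) mem_Collect_eq)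
      ultimately show "z \<in> of_real ` real_roots_At p t" by blast
    qed
  qed
  have inj: "inj_on (complex_of_real) (real_roots_At p t)" by (simp add: inj_on_def)
  show "finite (real_roots_At p t)" using fin img inj by (metis finite_imageD)
  show "card (real_roots_At p t) = M" using card_image[OF inj] img cardZ by simp
qed


lemma key_field:
  fixes P PB pa pba w \<alpha> u v Qy Qa S T1 T2 E G W :: complex
  assumes nz: "P \<noteq> 0" "PB \<noteq> 0" "pa \<noteq> 0" "pba \<noteq> 0" "w - \<alpha> \<noteq> 0" "E \<noteq> 0" "G \<noteq> 0"
    and EG: "E - G = 2 * \<i>" and W: "W = E * G"
    and hS: "S * (w - \<alpha>) = u * P + v * PB"
    and hT1: "T1 * (w - \<alpha>) = pa * Qy - Qa * P"
    and hT2: "T2 * (w - \<alpha>) = pba * Qy - Qa * PB"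
    and hr: "u * pa + v * pba = 0"
  shows "Qy * S / (P * PB) = v * (T1 * E + Qa * P) / (pa * (P * E))
           + u * (T2 * G + Qa * PB) / (pba * (PB * G))
           + (2 * \<i> * v * Qa / pa) / W"
proof -
  have u: "u = - v * pba / pa" using hr nz by (simp add: field_simps eq_neg_iff_add_eq_0)
  define d where "d = w - \<alpha>"
  have d: "d \<noteq> 0" using nz unfolding d_def by simp
  have e1: "Qy * (u * P + v * PB) / (P * PB) = u * Qy / PB + v * Qy / P" using nz by (simp add: field_simps)
  have e2: "v * (pa * Qy - Qa * P) / (pa * P) + u * (pba * Qy - Qa * PB) / (pba * PB)
        = v * Qy / P + u * Qy / PB - Qa * (u * pa + v * pba) / (pa * pba)" using nz by (simp add: field_simps)
  have l: "Qy * S / (P * PB) = (Qy * (S * d) / (P * PB)) / d" using d by simp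
  have r: "v * T1 / (pa * P) + u * T2 / (pba * PB) = (v * (T1 * d) / (pa * P) + u * (T2 * d) / (pba * PB)) / d"
    using d by (simp add: field_simps)
  have e3: "Qa * (u * pa + v * pba) / (pa * pba) = 0" using hr by simp
  have e2': "v * (pa * Qy - Qa * P) / (pa * P) + u * (pba * Qy - Qa * PB) / (pba * PB) = u * Qy / PB + v * Qy / P"
    using e2 e3 by (metis add.commute diff_zero)
  have h: "Qy * S / (P * PB) = v * T1 / (pa * P) + u * T2 / (pba * PB)"
  proof -
    have "Qy * S / (P * PB) = (Qy * (S * d) / (P * PB)) / d" by (rule l)
    also have "\<dots> = (Qy * (u * P + v * PB) / (P * PB)) / d" unfolding d_def by (simp only: hS)
    also have "\<dots> = (u * Qy / PB + v * Qy / P) / d" by (simp only: e1)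
    also have "\<dots> = (v * (pa * Qy - Qa * P) / (pa * P) + u * (pba * Qy - Qa * PB) / (pba * PB)) / d"
      by (simp only: e2')
    also have "\<dots> = (v * (T1 * d) / (pa * P) + u * (T2 * d) / (pba * PB)) / d"
      unfolding d_def by (simp only: hT1 hT2)
    also have "\<dots> = v * T1 / (pa * P) + u * T2 / (pba * PB)" by (rule r[symmetric])
    finally show ?thesis .
  qed
  have r1: "v * (T1 * E + Qa * P) / (pa * (P * E)) = v * T1 / (pa * P) + v * Qa / (pa * E)"
    using nz by (simp add: field_simps)
  have r2: "u * (T2 * G + Qa * PB) / (pba * (PB * G)) = u * T2 / (pba * PB) - v * Qa / (pa * G)"
    using nz unfolding u by (simp add: field_simps)
  have c: "v * Qa / (pa * E) - v * Qa / (pa * G) + (2 * \<i> * v * Qa / pa) / W = 0"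
  proof -
    have s1: "v * Qa / (pa * E) - v * Qa / (pa * G) = v * Qa * (G - E) / (pa * (E * G))"
      using nz by (simp add: field_simps)
    have GE: "G - E = - (2 * \<i>)" using EG by (metis minus_diff_eq)
    have s2: "v * Qa * (G - E) / (pa * (E * G)) = - ((2 * \<i> * v * Qa / pa) / W)"
      unfolding GE W using nz by (simp add: field_simps)
    show ?thesis using s1 s2 by simp
  qed
  show ?thesis unfolding h r1 r2 using c by (simp add: algebra_simps)
qed


lemma coeff_linear_mult: fixes c :: complex shows "coeff ([:c, 1:] * T) (Suc m) = c * coeff T (Suc m) + coeff T m"
  by simp

lemma key_identity:
  fixes p Q :: "complex poly" and M :: nat and t a :: real
  assumes monic: "lead_coeff p = 1" and degp: "degree p = M" and M1: "M \<ge> 1"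
    and nozero: "\<forall>z. Im z \<ge> 0 \<longrightarrow> poly p z \<noteq> 0" and degQ: "degree Q < M"
    and root: "poly (polyA p + smult (of_real t) (polyB p)) (of_real a) = 0"
  defines "S \<equiv> synthetic_div (polyA p + smult (of_real t) (polyB p)) (of_real a)"
  defines "\<Psi> \<equiv> (\<lambda>y::real. poly Q (of_real y) * poly S (of_real y) /
                    (poly p (of_real y) * poly (conj_poly p) (of_real y)))"
  shows "integrable lborel \<Psi>"
    and "of_real pi * poly Q (of_real a) = poly (polyB p) (of_real a) * integral\<^sup>L lborel \<Psi>"
proof -
  define F where "F = polyA p + smult (of_real t) (polyB p)"
  define \<alpha> where "\<alpha> = complex_of_real a"
  define pb where "pb = conj_poly p"
  define u where "u = (1 - \<i> * of_real t) / (2::complex)"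
  define v where "v = (1 + \<i> * of_real t) / (2::complex)"
  define pa where "pa = poly p \<alpha>"
  define pba where "pba = poly pb \<alpha>"
  define Qa where "Qa = poly Q \<alpha>"
  have Feq: "F = smult u p + smult v pb" unfolding F_def u_def v_def pb_def by (rule F_eq)
  have uv: "u + v = 1" unfolding u_def v_def by (simp add: field_simps)
  have p0: "p \<noteq> 0" using monic by auto
  have cal: "cnj \<alpha> = \<alpha>" unfolding \<alpha>_def by simp
  have pa0: "pa \<noteq> 0" unfolding pa_def \<alpha>_def using nozero by simp
  have pba_eq: "pba = cnj pa" unfolding pba_def pa_def pb_def poly_conj_poly cal ..
  have pba0: "pba \<noteq> 0" using pa0 pba_eq by simp
  have hr: "u * pa + v * pba = 0" using root unfolding F_def[symmetric] Feq pa_def pba_def \<alpha>_def by simp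
  have dpb: "degree pb = M" unfolding pb_def using degp by simp
  have cpb: "coeff pb n = cnj (coeff p n)" for n unfolding pb_def by (rule coeff_conj_poly)
  have lpb: "coeff pb M = 1" using monic degp cpb by simp
  have pb0: "pb \<noteq> 0" using lpb by auto
  have pbnz: "poly pb z \<noteq> 0" if "Im z \<le> 0" for z
    unfolding pb_def poly_conj_poly using nozero that by simp
  obtain m where Mm: "M = Suc m" using M1 by (cases M) auto
  have hS0: "[:-\<alpha>, 1:] * S = F"
    using synthetic_div_correct'[of \<alpha> F] root unfolding S_def F_def \<alpha>_def by simp
  define X1 where "X1 = smult pa Q - smult Qa p"
  define T1 where "T1 = synthetic_div X1 \<alpha>"
  have X1r: "poly X1 \<alpha> = 0" unfolding X1_def pa_def Qa_def by simp
  have hT10: "[:-\<alpha>, 1:] * T1 = X1" using synthetic_div_correct'[of \<alpha> X1] X1r unfolding T1_def by simp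
  have dX1: "degree X1 \<le> M" unfolding X1_def using degQ degp
    by (intro degree_diff_le) (auto intro: order_trans[OF degree_smult_le])
  have cX1: "coeff X1 M = - Qa" unfolding X1_def using degQ monic degp by (simp add: coeff_eq_0)
  have dT1: "degree T1 \<le> m" unfolding T1_def degree_synthetic_div using dX1 Mm by simp
  have cT1: "coeff T1 m = - Qa"
  proof -
    have "coeff X1 (Suc m) = - \<alpha> * coeff T1 (Suc m) + coeff T1 m"
      unfolding hT10[symmetric] by (rule coeff_linear_mult)
    moreover have "coeff T1 (Suc m) = 0" using dT1 by (simp add: coeff_eq_0)
    ultimately show ?thesis using cX1 Mm by simp
  qed
  define N1 where "N1 = T1 * [:\<i>, 1:] + smult Qa p"
  define D1 where "D1 = smult pa (p * [:\<i>, 1:])"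
  have dN1: "degree N1 \<le> m"
  proof (rule degree_le, intro allI impI)
    fix i assume i: "m < i"
    then obtain j where j: "i = Suc j" by (cases i) auto
    have "coeff N1 i = \<i> * coeff T1 (Suc j) + coeff T1 j + Qa * coeff p i"
      unfolding N1_def j by (simp add: mult.commute[of T1])
    moreover have "coeff T1 (Suc j) = 0" using dT1 i j by (simp add: coeff_eq_0)
    moreover have "i = M \<Longrightarrow> coeff T1 j = - Qa \<and> coeff p i = 1" using cT1 Mm j monic degp by simp
    moreover have "i \<noteq> M \<Longrightarrow> coeff T1 j = 0 \<and> coeff p i = 0"
      using dT1 i j Mm degp by (auto simp: coeff_eq_0)
    ultimately show "coeff N1 i = 0" by (cases "i = M") auto
  qed
  have dD1: "degree D1 = Suc M"
  proof -
    have "degree (p * [:\<i>, 1:]) = degree p + degree [:\<i>, 1:]" by (rule degree_mult_eq) (use p0 in auto)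
    then show ?thesis unfolding D1_def using pa0 degp by simp
  qed
  have D10: "D1 \<noteq> 0" using dD1 by auto
  have U: "integrable lborel (\<lambda>y::real. poly (smult v N1) (of_real y) / poly D1 (of_real y))"
          "integral\<^sup>L lborel (\<lambda>y::real. poly (smult v N1) (of_real y) / poly D1 (of_real y)) = 0"
  proof -
    have deg: "degree (smult v N1) + 2 \<le> degree D1"
      using dN1 dD1 Mm degree_smult_le[of v N1] by simp
    have nz: "poly D1 z \<noteq> 0" if "Im z \<ge> 0" for z
    proof -
      have "\<i> + z \<noteq> 0" using that by (auto simp: complex_eq_iff)
      moreover have "poly D1 z = pa * (poly p z * poly [:\<i>, 1:] z)" by (simp only: D1_def poly_smult poly_mult)
      moreover have "poly [:\<i>, 1:] z = \<i> + z" by simp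
      ultimately show ?thesis using pa0 nozero that by simp
    qed
    show "integrable lborel (\<lambda>y::real. poly (smult v N1) (of_real y) / poly D1 (of_real y))"
      by (rule upper_halfplane_integral_zero(1)[OF D10 deg nz])
    show "integral\<^sup>L lborel (\<lambda>y::real. poly (smult v N1) (of_real y) / poly D1 (of_real y)) = 0"
      by (rule upper_halfplane_integral_zero(2)[OF D10 deg nz])
  qed
  define X2 where "X2 = smult pba Q - smult Qa pb"
  define T2 where "T2 = synthetic_div X2 \<alpha>"
  have X2r: "poly X2 \<alpha> = 0" unfolding X2_def pba_def Qa_def by simp
  have hT20: "[:-\<alpha>, 1:] * T2 = X2" using synthetic_div_correct'[of \<alpha> X2] X2r unfolding T2_def by simp
  have dX2: "degree X2 \<le> M" unfolding X2_def using degQ dpb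
    by (intro degree_diff_le) (auto intro: order_trans[OF degree_smult_le])
  have cX2: "coeff X2 M = - Qa" unfolding X2_def using degQ lpb by (simp add: coeff_eq_0)
  have dT2: "degree T2 \<le> m" unfolding T2_def degree_synthetic_div using dX2 Mm by simp
  have cT2: "coeff T2 m = - Qa"
  proof -
    have "coeff X2 (Suc m) = - \<alpha> * coeff T2 (Suc m) + coeff T2 m"
      unfolding hT20[symmetric] by (rule coeff_linear_mult)
    moreover have "coeff T2 (Suc m) = 0" using dT2 by (simp add: coeff_eq_0)
    ultimately show ?thesis using cX2 Mm by simp
  qed
  define N2 where "N2 = T2 * [:-\<i>, 1:] + smult Qa pb"
  define D2 where "D2 = smult pba (pb * [:-\<i>, 1:])"
  have dN2: "degree N2 \<le> m"
  proof (rule degree_le, intro allI impI)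
    fix i assume i: "m < i"
    then obtain j where j: "i = Suc j" by (cases i) auto
    have "coeff N2 i = - \<i> * coeff T2 (Suc j) + coeff T2 j + Qa * coeff pb i"
      unfolding N2_def j by (simp add: mult.commute[of T2])
    moreover have "coeff T2 (Suc j) = 0" using dT2 i j by (simp add: coeff_eq_0)
    moreover have "i = M \<Longrightarrow> coeff T2 j = - Qa \<and> coeff pb i = 1" using cT2 Mm j lpb by simp
    moreover have "i \<noteq> M \<Longrightarrow> coeff T2 j = 0 \<and> coeff pb i = 0"
      using dT2 i j Mm dpb by (auto simp: coeff_eq_0)
    ultimately show "coeff N2 i = 0" by (cases "i = M") auto
  qed
  have dD2: "degree D2 = Suc M"
  proof -
    have "degree (pb * [:-\<i>, 1:]) = degree pb + degree [:-\<i>, 1:]" by (rule degree_mult_eq) (use pb0 in auto)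
    then show ?thesis unfolding D2_def using pba0 dpb by simp
  qed
  have D20: "D2 \<noteq> 0" using dD2 by auto
  have L: "integrable lborel (\<lambda>y::real. poly (smult u N2) (of_real y) / poly D2 (of_real y))"
          "integral\<^sup>L lborel (\<lambda>y::real. poly (smult u N2) (of_real y) / poly D2 (of_real y)) = 0"
  proof -
    have deg: "degree (smult u N2) + 2 \<le> degree D2"
      using dN2 dD2 Mm degree_smult_le[of u N2] by simp
    have nz: "poly D2 z \<noteq> 0" if "Im z \<le> 0" for z
    proof -
      have "- \<i> + z \<noteq> 0" using that by (auto simp: complex_eq_iff)
      moreover have "poly D2 z = pba * (poly pb z * poly [:-\<i>, 1:] z)" by (simp only: D2_def poly_smult poly_mult)
      moreover have "poly [:-\<i>, 1:] z = - \<i> + z" by simp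
      ultimately show ?thesis using pba0 pbnz that by simp
    qed
    show "integrable lborel (\<lambda>y::real. poly (smult u N2) (of_real y) / poly D2 (of_real y))"
      by (rule lower_halfplane_integral_zero(1)[OF D20 deg nz])
    show "integral\<^sup>L lborel (\<lambda>y::real. poly (smult u N2) (of_real y) / poly D2 (of_real y)) = 0"
      by (rule lower_halfplane_integral_zero(2)[OF D20 deg nz])
  qed
  define C where "C = 2 * \<i> * v * Qa / pa"
  note K = integral_inv_one_plus_sq[of C]
  define R where "R = (\<lambda>y::real. poly (smult v N1) (of_real y) / poly D1 (of_real y)
                   + poly (smult u N2) (of_real y) / poly D2 (of_real y) + C / (of_real y ^ 2 + 1))"
  have Ri: "integrable lborel R" unfolding R_def using U(1) L(1) K(1) by auto
  have Rv: "integral\<^sup>L lborel R = C * pi" unfolding R_def using U L K by simp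
  have pw: "\<Psi> y = R y" if ya: "y \<noteq> a" for y
  proof -
    define w where "w = complex_of_real y"
    have P0: "poly p w \<noteq> 0" unfolding w_def using nozero by simp
    have PB0: "poly pb w \<noteq> 0" unfolding w_def by (rule pbnz) simp
    have wa: "w - \<alpha> \<noteq> 0" unfolding w_def \<alpha>_def using ya by simp
    have E0: "\<i> + w \<noteq> 0" unfolding w_def by (simp add: complex_eq_iff)
    have G0: "- \<i> + w \<noteq> 0" unfolding w_def by (simp add: complex_eq_iff)
    have W: "w ^ 2 + 1 = (\<i> + w) * (- \<i> + w)" by (simp add: power2_eq_square algebra_simps)
    have hS: "poly S w * (w - \<alpha>) = u * poly p w + v * poly pb w"
      using arg_cong[OF hS0, of "\<lambda>q. poly q w"] by (simp add: Feq algebra_simps)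
    have hT1: "poly T1 w * (w - \<alpha>) = pa * poly Q w - Qa * poly p w"
      using arg_cong[OF hT10, of "\<lambda>q. poly q w"] by (simp add: X1_def algebra_simps)
    have hT2: "poly T2 w * (w - \<alpha>) = pba * poly Q w - Qa * poly pb w"
      using arg_cong[OF hT20, of "\<lambda>q. poly q w"] by (simp add: X2_def algebra_simps)
    have kf: "poly Q w * poly S w / (poly p w * poly pb w) =
        v * (poly T1 w * (\<i> + w) + Qa * poly p w) / (pa * (poly p w * (\<i> + w)))
      + u * (poly T2 w * (- \<i> + w) + Qa * poly pb w) / (pba * (poly pb w * (- \<i> + w)))
      + (2 * \<i> * v * Qa / pa) / (w ^ 2 + 1)"
      by (rule key_field[OF P0 PB0 pa0 pba0 wa E0 G0 _ W hS hT1 hT2 hr]) simp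
    have e1: "poly (smult v N1) w / poly D1 w = v * (poly T1 w * (\<i> + w) + Qa * poly p w) / (pa * (poly p w * (\<i> + w)))"
    proof -
      have a1: "poly (smult v N1) w = v * (poly T1 w * poly [:\<i>, 1:] w + Qa * poly p w)"
        by (simp only: N1_def poly_smult poly_add poly_mult)
      have a2: "poly D1 w = pa * (poly p w * poly [:\<i>, 1:] w)" by (simp only: D1_def poly_smult poly_mult)
      have a3: "poly [:\<i>, 1:] w = \<i> + w" by simp
      show ?thesis unfolding a1 a2 a3 ..
    qed
    have e2: "poly (smult u N2) w / poly D2 w = u * (poly T2 w * (- \<i> + w) + Qa * poly pb w) / (pba * (poly pb w * (- \<i> + w)))"
    proof -
      have a1: "poly (smult u N2) w = u * (poly T2 w * poly [:-\<i>, 1:] w + Qa * poly pb w)"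
        by (simp only: N2_def poly_smult poly_add poly_mult)
      have a2: "poly D2 w = pba * (poly pb w * poly [:-\<i>, 1:] w)" by (simp only: D2_def poly_smult poly_mult)
      have a3: "poly [:-\<i>, 1:] w = - \<i> + w" by simp
      show ?thesis unfolding a1 a2 a3 ..
    qed
    show ?thesis unfolding \<Psi>_def R_def C_def using kf e1 e2 unfolding w_def pb_def by simp
  qed
  have \<Psi>m: "\<Psi> \<in> borel_measurable lborel"
  proof -
    have "continuous_on UNIV \<Psi>" unfolding \<Psi>_def using nozero pbnz[unfolded pb_def]
      by (auto intro!: continuous_intros)
    then show ?thesis by (simp add: borel_measurable_continuous_onI)
  qed
  have Rm: "R \<in> borel_measurable lborel" using Ri by auto
  have ae: "AE y in lborel. \<Psi> y = R y"
    using AE_lborel_singleton[of a] by eventually_elim (rule pw)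
  show "integrable lborel \<Psi>" using integrable_cong_AE[OF \<Psi>m Rm ae] Ri by simp
  have iv: "integral\<^sup>L lborel \<Psi> = C * pi" using integral_cong_AE[OF \<Psi>m Rm ae] Rv by simp
  have Bv: "poly (polyB p) (of_real a) = (pa - pba) / (2 * \<i>)"
    unfolding polyB_def pa_def pba_def pb_def \<alpha>_def by simp
  have vv: "v * (pa - pba) = pa"
  proof -
    have vp: "v * pba = - (u * pa)" using hr by (simp add: eq_neg_iff_add_eq_0 add.commute)
    have "v * (pa - pba) = v * pa - v * pba" by (simp add: right_diff_distrib)
    also have "\<dots> = (u + v) * pa" unfolding vp by (simp add: algebra_simps)
    finally show ?thesis using uv by simp
  qed
  show "of_real pi * poly Q (of_real a) = poly (polyB p) (of_real a) * integral\<^sup>L lborel \<Psi>"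
  proof -
    have "poly (polyB p) (of_real a) * integral\<^sup>L lborel \<Psi> = (v * (pa - pba)) * Qa * of_real pi / pa"
      unfolding iv Bv C_def using pa0 by (simp add: field_simps)
    also have "\<dots> = of_real pi * Qa" unfolding vv using pa0 by simp
    finally show ?thesis unfolding Qa_def \<alpha>_def by simp
  qed
qed


lemma poly_of_real_meas [measurable]:
  "(\<lambda>y::real. poly (q :: complex poly) (of_real y)) \<in> borel_measurable borel"
  by (intro borel_measurable_continuous_onI continuous_intros)

lemma ratio_integrable:
  fixes N D :: "complex poly" and s :: real
  assumes nz: "\<And>z. Im z \<ge> 0 \<Longrightarrow> poly D z \<noteq> 0" and deg: "degree N < degree D" and s: "s > 1"
  shows "integrable lborel (\<lambda>y::real. norm (poly N (of_real y) / poly D (of_real y)) powr s)"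
proof -
  have D0: "D \<noteq> 0" using nz[of 0] by auto
  obtain K where K: "\<And>z. z \<in> {z. Im z \<ge> 0} \<Longrightarrow> norm (poly N z / poly D z) \<le> K / (1 + norm z) ^ 1"
    using rational_bound[OF D0, of N 1 "{z. Im z \<ge> 0}"] deg nz by (auto simp: closed_halfspace_Im_ge)
  have "integrable lborel (\<lambda>y::real. K powr s * (1 + \<bar>y\<bar>) powr (-s))"
    using integrable_one_plus_abs_powr[OF s] by simp
  then show ?thesis
  proof (rule Bochner_Integration.integrable_bound)
    show "(\<lambda>y::real. norm (poly N (of_real y) / poly D (of_real y)) powr s) \<in> borel_measurable lborel"
      by measurable
    show "AE y in lborel. norm (norm (poly N (of_real y) / poly D (of_real y)) powr s) \<le> norm (K powr s * (1 + \<bar>y\<bar>) powr - s)"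
    proof (rule AE_I2)
      fix y :: real
      have b: "norm (poly N (of_real y) / poly D (of_real y)) \<le> K / (1 + \<bar>y\<bar>)" using K[of "of_real y"] by simp
      have Kn: "K \<ge> 0" using b by (smt (verit) divide_nonneg_pos norm_ge_zero divide_neg_pos)
      have "norm (poly N (of_real y) / poly D (of_real y)) powr s \<le> (K / (1 + \<bar>y\<bar>)) powr s"
        using b s by (intro powr_mono2) auto
      also have "\<dots> = K powr s / (1 + \<bar>y\<bar>) powr s"
        using Kn by (auto intro!: powr_divide)
      also have "\<dots> = K powr s * (1 + \<bar>y\<bar>) powr (-s)"
        by (simp add: powr_minus divide_inverse)
      finally show "norm (norm (poly N (of_real y) / poly D (of_real y)) powr s) \<le> norm (K powr s * (1 + \<bar>y\<bar>) powr - s)"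
        by simp
    qed
  qed
qed

lemma Lp_norm_pi_nonneg: "Lp_norm_pi r f \<ge> 0"
  unfolding Lp_norm_pi_def by simp

lemma Lp_norm_pi_pow:
  assumes r: "r > 0"
  shows "Lp_norm_pi r f powr r = integral\<^sup>L lborel (\<lambda>y. norm (f y) powr r / pi)"
proof -
  have X: "integral\<^sup>L lborel (\<lambda>y. norm (f y) powr r / pi) \<ge> 0" by (rule integral_nonneg_AE) simp
  show ?thesis unfolding Lp_norm_pi_def using r X by (simp add: powr_powr)
qed

lemma Lp_norm_pi_root:
  assumes r: "r > 0"
  shows "(integral\<^sup>L lborel (\<lambda>y. norm (f y) powr r)) powr (1/r) = pi powr (1/r) * Lp_norm_pi r f"
proof -
  have X: "integral\<^sup>L lborel (\<lambda>y. norm (f y) powr r) \<ge> 0" by (rule integral_nonneg_AE) simp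
  have "integral\<^sup>L lborel (\<lambda>y. norm (f y) powr r / pi) = integral\<^sup>L lborel (\<lambda>y. norm (f y) powr r) / pi"
    by simp
  then have "Lp_norm_pi r f = (integral\<^sup>L lborel (\<lambda>y. norm (f y) powr r)) powr (1/r) / pi powr (1/r)"
    unfolding Lp_norm_pi_def using X by (simp add: powr_divide)
  then show ?thesis by simp
qed

lemma holder_Lp:
  fixes f g :: "real \<Rightarrow> complex" and r r' :: real
  assumes r: "r > 1" and r': "r' > 1" and conj: "1/r + 1/r' = 1"
    and fm: "f \<in> borel_measurable lborel" and gm: "g \<in> borel_measurable lborel"
    and fi: "integrable lborel (\<lambda>y. norm (f y) powr r)" and gi: "integrable lborel (\<lambda>y. norm (g y) powr r')"
  shows "integrable lborel (\<lambda>y. norm (f y) * norm (g y))"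
    and "integral\<^sup>L lborel (\<lambda>y. norm (f y) * norm (g y)) \<le> pi * Lp_norm_pi r f * Lp_norm_pi r' g"
proof -
  note H = holder[OF r r' conj, of "\<lambda>y. norm (f y)" "\<lambda>y. norm (g y)"]
  show "integrable lborel (\<lambda>y. norm (f y) * norm (g y))" using H fm gm fi gi by simp
  have "integral\<^sup>L lborel (\<lambda>y. norm (f y) * norm (g y)) \<le>
      (integral\<^sup>L lborel (\<lambda>y. norm (f y) powr r)) powr (1/r) * (integral\<^sup>L lborel (\<lambda>y. norm (g y) powr r')) powr (1/r')"
    using H fm gm fi gi by simp
  also have "\<dots> = (pi powr (1/r) * pi powr (1/r')) * (Lp_norm_pi r f * Lp_norm_pi r' g)"
    using r r' by (simp add: Lp_norm_pi_root)
  also have "pi powr (1/r) * pi powr (1/r') = pi" using conj by (simp add: powr_add[symmetric])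
  finally show "integral\<^sup>L lborel (\<lambda>y. norm (f y) * norm (g y)) \<le> pi * Lp_norm_pi r f * Lp_norm_pi r' g"
    by (simp add: mult.assoc)
qed

lemma S_facts:
  fixes F :: "complex poly" and \<alpha> :: complex
  assumes root: "poly F \<alpha> = 0"
  shows "[:-\<alpha>, 1:] * synthetic_div F \<alpha> = F"
    and "poly (synthetic_div F \<alpha>) \<alpha> = poly (pderiv F) \<alpha>"
    and "\<And>\<beta>. \<beta> \<noteq> \<alpha> \<Longrightarrow> poly F \<beta> = 0 \<Longrightarrow> poly (synthetic_div F \<alpha>) \<beta> = 0"
    and "\<And>w. w \<noteq> \<alpha> \<Longrightarrow> poly (synthetic_div F \<alpha>) w = poly F w / (w - \<alpha>)"
proof -
  show e: "[:-\<alpha>, 1:] * synthetic_div F \<alpha> = F" using synthetic_div_correct'[of \<alpha> F] root by simp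
  have "pderiv F = [:-\<alpha>, 1:] * pderiv (synthetic_div F \<alpha>) + synthetic_div F \<alpha> * pderiv [:-\<alpha>, 1:]"
    by (subst e[symmetric]) (rule pderiv_mult)
  then show "poly (synthetic_div F \<alpha>) \<alpha> = poly (pderiv F) \<alpha>" by (simp add: pderiv_pCons)
  have pw: "poly F w = (w - \<alpha>) * poly (synthetic_div F \<alpha>) w" for w
    using arg_cong[OF e, of "\<lambda>q. poly q w"] by (simp add: algebra_simps)
  show "poly (synthetic_div F \<alpha>) \<beta> = 0" if "\<beta> \<noteq> \<alpha>" "poly F \<beta> = 0" for \<beta>
    using pw[of \<beta>] that by simp
  show "poly (synthetic_div F \<alpha>) w = poly F w / (w - \<alpha>)" if "w \<noteq> \<alpha>" for w
    using pw[of w] that by (simp add: field_simps)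
qed


theorem proposition4p4:
  fixes p Q :: "complex poly" and M :: nat and t r r' :: real
  assumes monic: "lead_coeff p = 1"
    and degp: "degree p = M" and M1: "M \<ge> 1"
    and nozero: "\<forall>z. Im z \<ge> 0 \<longrightarrow> poly p z \<noteq> 0"
    and r1: "1 < r" and conj: "1 / r + 1 / r' = 1"
    and degQ: "degree Q < M"
  shows "Lp_norm_pi r (\<lambda>y. poly Q (of_real y) / poly p (of_real y))
           \<le> real M powr (1 / r') *
             (\<Sum>a\<in>real_roots_At p t.
                 norm (poly Q (of_real a) /
                   (poly (pderiv (polyA p)) (of_real a) + of_real t * poly (pderiv (polyB p)) (of_real a))) powr r
                 * Ij p t a r powr r) powr (1 / r)
       \<and> (\<Sum>a\<in>real_roots_At p t.
             norm (poly Q (of_real a)) powr r /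
               norm (poly (pderiv (polyA p)) (of_real a) + of_real t * poly (pderiv (polyB p)) (of_real a)) powr r
             * Ij p t a r powr r) powr (1 / r)
         \<le> Lp_norm_pi r (\<lambda>y. poly Q (of_real y) / poly p (of_real y)) *
           (\<Sum>a\<in>real_roots_At p t.
             norm (poly (polyB p) (of_real a)) powr r /
               norm (poly (pderiv (polyA p)) (of_real a) + of_real t * poly (pderiv (polyB p)) (of_real a)) powr r
             * Ij p t a r powr r * Ij p t a r' powr r) powr (1 / r)"
proof -
  define F where "F = polyA p + smult (of_real t) (polyB p)"
  define R where "R = real_roots_At p t"
  note FF = F_facts[OF monic degp M1 nozero, of t, folded F_def R_def]
  have finR: "finite R" and cardR: "card R = M" and imgR: "of_real ` R = {z. poly F z = 0}"
    using FF by auto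
  have simple: "\<And>z. poly F z = 0 \<Longrightarrow> poly (pderiv F) z \<noteq> 0" using FF by auto
  have Rroot: "poly F (of_real a) = 0" if "a \<in> R" for a
    using that unfolding R_def real_roots_At_def F_def by simp
  have r0: "r > 0" using r1 by simp
  have r'1: "r' > 1"
  proof -
    have "1 / r' = 1 - 1 / r" using conj by simp
    moreover have "0 < 1 - 1 / r" "1 - 1 / r < 1" using r1 by auto
    ultimately have "0 < 1 / r'" "1 / r' < 1" by auto
    then show ?thesis by (simp add: field_simps split: if_splits)
  qed
  have r'0: "r' > 0" using r'1 by simp
  define S where "S = (\<lambda>a::real. synthetic_div F (of_real a))"
  define den where "den = (\<lambda>a::real. poly (pderiv (polyA p)) (of_real a) + of_real t * poly (pderiv (polyB p)) (of_real a))"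
  have den_eq: "den a = poly (pderiv F) (of_real a)" for a
    unfolding den_def F_def by (simp add: pderiv_add pderiv_smult)
  have Sa: "poly (S a) (of_real a) = den a" if "a \<in> R" for a
    unfolding S_def den_eq using S_facts(2)[OF Rroot[OF that]] .
  have den0: "den a \<noteq> 0" if "a \<in> R" for a unfolding den_eq using simple[OF Rroot[OF that]] .
  have Sb: "poly (S a) (of_real b) = 0" if "a \<in> R" "b \<in> R" "b \<noteq> a" for a b
    unfolding S_def using S_facts(3)[OF Rroot[OF that(1)], of "of_real b"] Rroot[OF that(2)] that(3) by simp
  have Sw: "poly (S a) w = poly F w / (w - of_real a)" if "a \<in> R" "w \<noteq> of_real a" for a w
    unfolding S_def using S_facts(4)[OF Rroot[OF that(1)] that(2)] .
  have degF: "degree F = M" using FF by auto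
  have degS: "degree (S a) = M - 1" for a unfolding S_def degree_synthetic_div degF ..
  define c where "c = (\<lambda>a. poly Q (of_real a) / den a)"
  \<comment> \<open>Lagrange interpolation\<close>
  define L where "L = (\<Sum>a\<in>R. smult (c a) (S a))"
  have pL: "poly L w = (\<Sum>a\<in>R. c a * poly (S a) w)" for w unfolding L_def by (simp add: poly_sum)
  have QL: "Q = L"
  proof (rule ccontr)
    assume ne: "Q \<noteq> L"
    define G where "G = Q - L"
    have G0: "G \<noteq> 0" using ne unfolding G_def by simp
    have dL: "degree L \<le> M - 1" unfolding L_def
      by (rule degree_sum_le[OF finR]) (auto intro: order_trans[OF degree_smult_le] simp: degS)
    have dG: "degree G < M"
    proof -
      have "degree G \<le> max (degree Q) (degree L)" unfolding G_def by (rule degree_diff_le_max)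
      then show ?thesis using dL degQ M1 by linarith
    qed
    have sub: "of_real ` R \<subseteq> {z. poly G z = 0}"
    proof
      fix z :: complex assume "z \<in> of_real ` R"
      then obtain b where b: "b \<in> R" "z = of_real b" by auto
      have "poly L (of_real b) = c b * poly (S b) (of_real b) + (\<Sum>a\<in>R - {b}. c a * poly (S a) (of_real b))"
        unfolding pL using sum.remove[OF finR b(1)] .
      also have "(\<Sum>a\<in>R - {b}. c a * poly (S a) (of_real b)) = 0"
        by (rule sum.neutral) (use Sb b(1) in auto)
      also have "c b * poly (S b) (of_real b) = poly Q (of_real b)"
        unfolding c_def Sa[OF b(1)] using den0[OF b(1)] by simp
      finally show "z \<in> {z. poly G z = 0}" unfolding G_def b(2) by simp
    qed
    have "card (of_real ` R :: complex set) = M"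
      using card_image[of "complex_of_real" R] cardR by (simp add: inj_on_def)
    moreover have "card (of_real ` R :: complex set) \<le> card {z. poly G z = 0}"
      by (rule card_mono[OF poly_roots_finite[OF G0] sub])
    moreover have "card {z. poly G z = 0} \<le> degree G" by (rule card_poly_roots_bound[OF G0])
    ultimately show False using dG by simp
  qed
  define f where "f = (\<lambda>y::real. poly Q (of_real y) / poly p (of_real y))"
  define g where "g = (\<lambda>a y::real. poly (S a) (of_real y) / poly p (of_real y))"
  have fm: "f \<in> borel_measurable lborel" unfolding f_def by measurable
  have gm: "g a \<in> borel_measurable lborel" for a unfolding g_def by measurable
  have nzp: "\<And>z. Im z \<ge> 0 \<Longrightarrow> poly p z \<noteq> 0" using nozero by simp
  have dQp: "degree Q < degree p" using degQ degp by simp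
  have dSp: "degree (S a) < degree p" for a using degS[of a] degp M1 by simp
  have fi: "integrable lborel (\<lambda>y. norm (f y) powr s)" if "s > 1" for s
    unfolding f_def by (rule ratio_integrable[OF nzp dQp that])
  have gi: "integrable lborel (\<lambda>y. norm (g a y) powr s)" if "s > 1" for s a
    unfolding g_def by (rule ratio_integrable[OF nzp dSp that])
  have Ij_eq: "Ij p t a s = Lp_norm_pi s (g a)" if a: "a \<in> R" for a s
  proof -
    have "integral\<^sup>L lborel (\<lambda>y. norm (poly F (of_real y) / ((of_real y - of_real a) * poly p (of_real y))) powr s / pi)
        = integral\<^sup>L lborel (\<lambda>y. norm (g a y) powr s / pi)"
    proof (rule integral_cong_AE)
      show "(\<lambda>y. norm (poly F (of_real y) / ((of_real y - of_real a) * poly p (of_real y))) powr s / pi) \<in> borel_measurable lborel"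
        by measurable
      show "(\<lambda>y. norm (g a y) powr s / pi) \<in> borel_measurable lborel" using gm by measurable
      show "AE y in lborel. norm (poly F (of_real y) / ((of_real y - of_real a) * poly p (of_real y))) powr s / pi
              = norm (g a y) powr s / pi"
        using AE_lborel_singleton[of a]
      proof eventually_elim
        case (elim y)
        then have "complex_of_real y \<noteq> of_real a" by simp
        then show ?case unfolding g_def using Sw[OF a] by (simp add: divide_divide_eq_left)
      qed
    qed
    then show ?thesis unfolding Ij_def Lp_norm_pi_def F_def by simp
  qed
  have Ij_pow: "Ij p t a r powr r = integral\<^sup>L lborel (\<lambda>y. norm (g a y) powr r / pi)" if "a \<in> R" for a
    unfolding Ij_eq[OF that] by (rule Lp_norm_pi_pow[OF r0])
  have first: "Lp_norm_pi r f \<le> real M powr (1 / r') * (\<Sum>a\<in>R. norm (c a) powr r * Ij p t a r powr r) powr (1 / r)"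
  proof -
    have fsum: "f y = (\<Sum>a\<in>R. c a * g a y)" for y
      unfolding f_def g_def by (subst QL, subst pL) (simp add: sum_divide_distrib)
    have pt: "norm (f y) powr r / pi \<le> real M powr (r - 1) * (\<Sum>a\<in>R. norm (c a) powr r * (norm (g a y) powr r / pi))" for y
    proof -
      have "norm (f y) powr r \<le> real M powr (r - 1) * (\<Sum>a\<in>R. norm (c a * g a y) powr r)"
        unfolding fsum by (rule power_mean[OF finR]) (use r1 cardR in auto)
      also have "(\<Sum>a\<in>R. norm (c a * g a y) powr r) = (\<Sum>a\<in>R. norm (c a) powr r * norm (g a y) powr r)"
        by (simp add: norm_mult powr_mult)
      finally have "norm (f y) powr r / pi \<le> real M powr (r - 1) * (\<Sum>a\<in>R. norm (c a) powr r * norm (g a y) powr r) / pi"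
        by (rule divide_right_mono) simp
      also have "\<dots> = real M powr (r - 1) * (\<Sum>a\<in>R. norm (c a) powr r * (norm (g a y) powr r / pi))"
        by (simp only: times_divide_eq_right[symmetric]) (subst sum_divide_distrib, simp only: times_divide_eq_right)
      finally show ?thesis .
    qed
    have int_r: "integrable lborel (\<lambda>y. real M powr (r - 1) * (\<Sum>a\<in>R. norm (c a) powr r * (norm (g a y) powr r / pi)))"
      using gi[OF r1] by auto
    have "integral\<^sup>L lborel (\<lambda>y. norm (f y) powr r / pi) \<le>
          integral\<^sup>L lborel (\<lambda>y. real M powr (r - 1) * (\<Sum>a\<in>R. norm (c a) powr r * (norm (g a y) powr r / pi)))"
      by (rule integral_mono[OF _ int_r pt]) (use fi[OF r1] in auto)
    also have "\<dots> = real M powr (r - 1) * (\<Sum>a\<in>R. norm (c a) powr r * integral\<^sup>L lborel (\<lambda>y. norm (g a y) powr r / pi))"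
      using gi[OF r1] by (simp add: integral_sum)
    also have "\<dots> = real M powr (r - 1) * (\<Sum>a\<in>R. norm (c a) powr r * Ij p t a r powr r)"
      using Ij_pow by simp
    finally have X: "integral\<^sup>L lborel (\<lambda>y. norm (f y) powr r / pi) \<le> real M powr (r - 1) * (\<Sum>a\<in>R. norm (c a) powr r * Ij p t a r powr r)" .
    define \<Sigma> where "\<Sigma> = (\<Sum>a\<in>R. norm (c a) powr r * Ij p t a r powr r)"
    have \<Sigma>0: "\<Sigma> \<ge> 0" unfolding \<Sigma>_def by (auto intro!: sum_nonneg)
    have "Lp_norm_pi r f \<le> (real M powr (r - 1) * \<Sigma>) powr (1 / r)"
      unfolding Lp_norm_pi_def \<Sigma>_def using X r0
      by (intro powr_mono2) (auto intro!: integral_nonneg_AE)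
    also have "\<dots> = (real M powr (r - 1)) powr (1 / r) * \<Sigma> powr (1 / r)"
      using \<Sigma>0 by (simp add: powr_mult)
    also have "(real M powr (r - 1)) powr (1 / r) = real M powr (1 / r')"
    proof -
      have "(r - 1) * (1 / r) = 1 / r'" using conj r0 by (simp add: field_simps)
      then show ?thesis by (simp add: powr_powr)
    qed
    finally show ?thesis unfolding \<Sigma>_def .
  qed
  have node: "norm (poly Q (of_real a)) \<le> norm (poly (polyB p) (of_real a)) * Lp_norm_pi r f * Ij p t a r'"
    if a: "a \<in> R" for a
  proof -
    have root: "poly (polyA p + smult (of_real t) (polyB p)) (of_real a) = 0" using Rroot[OF a] unfolding F_def .
    define \<Psi> where "\<Psi> = (\<lambda>y::real. poly Q (of_real y) * poly (synthetic_div (polyA p + smult (complex_of_real t) (polyB p)) (complex_of_real a)) (of_real y) /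
                    (poly p (of_real y) * poly (conj_poly p) (of_real y)))"
    note KI = key_identity[OF monic degp M1 nozero degQ root, folded \<Psi>_def]
    have Psi_norm: "norm (\<Psi> y) = norm (f y) * norm (g a y)" for y
    proof -
      have "norm (poly (conj_poly p) (of_real y)) = norm (poly p (of_real y))"
        by (simp add: poly_conj_poly)
      then show ?thesis unfolding \<Psi>_def f_def g_def S_def F_def by (simp add: norm_mult norm_divide)
    qed
    have "pi * norm (poly Q (of_real a)) = norm (of_real pi * poly Q (of_real a))" by (simp add: norm_mult)
    also have "\<dots> = norm (poly (polyB p) (of_real a)) * norm (integral\<^sup>L lborel \<Psi>)"
      unfolding KI(2) by (simp add: norm_mult)
    also have "\<dots> \<le> norm (poly (polyB p) (of_real a)) * integral\<^sup>L lborel (\<lambda>y. norm (f y) * norm (g a y))"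
      unfolding Psi_norm[symmetric] by (intro mult_left_mono Bochner_Integration.integral_norm_bound) auto
    also have "\<dots> \<le> norm (poly (polyB p) (of_real a)) * (pi * Lp_norm_pi r f * Lp_norm_pi r' (g a))"
      by (intro mult_left_mono holder_Lp(2)[OF r1 r'1 conj fm gm fi[OF r1] gi[OF r'1]]) simp
    finally have "pi * norm (poly Q (of_real a)) \<le> pi * (norm (poly (polyB p) (of_real a)) * Lp_norm_pi r f * Ij p t a r')"
      unfolding Ij_eq[OF a] by (simp add: mult_ac)
    then show ?thesis by simp
  qed
  have second: "(\<Sum>a\<in>R. norm (poly Q (of_real a)) powr r / norm (den a) powr r * Ij p t a r powr r) powr (1 / r)
      \<le> Lp_norm_pi r f * (\<Sum>a\<in>R. norm (poly (polyB p) (of_real a)) powr r / norm (den a) powr r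
                              * Ij p t a r powr r * Ij p t a r' powr r) powr (1 / r)"
  proof -
    define N where "N = Lp_norm_pi r f"
    have N0: "N \<ge> 0" unfolding N_def by (rule Lp_norm_pi_nonneg)
    have le: "(\<Sum>a\<in>R. norm (poly Q (of_real a)) powr r / norm (den a) powr r * Ij p t a r powr r)
        \<le> N powr r * (\<Sum>a\<in>R. norm (poly (polyB p) (of_real a)) powr r / norm (den a) powr r
                              * Ij p t a r powr r * Ij p t a r' powr r)"
      unfolding sum_distrib_left
    proof (rule sum_mono)
      fix a assume a: "a \<in> R"
      have "norm (poly Q (of_real a)) powr r \<le> (norm (poly (polyB p) (of_real a)) * N * Ij p t a r') powr r"
        using node[OF a] r0 unfolding N_def by (intro powr_mono2) auto
      also have "\<dots> = norm (poly (polyB p) (of_real a)) powr r * N powr r * Ij p t a r' powr r"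
        using N0 by (simp add: powr_mult Lp_norm_pi_nonneg[of r' _, unfolded Ij_def[symmetric]] Ij_def)
      finally have "norm (poly Q (of_real a)) powr r / norm (den a) powr r * Ij p t a r powr r
          \<le> norm (poly (polyB p) (of_real a)) powr r * N powr r * Ij p t a r' powr r / norm (den a) powr r * Ij p t a r powr r"
        by (intro mult_right_mono divide_right_mono) auto
      then show "norm (poly Q (of_real a)) powr r / norm (den a) powr r * Ij p t a r powr r
          \<le> N powr r * (norm (poly (polyB p) (of_real a)) powr r / norm (den a) powr r * Ij p t a r powr r * Ij p t a r' powr r)"
        by (simp add: mult_ac)
    qed
    define \<Sigma> where "\<Sigma> = (\<Sum>a\<in>R. norm (poly (polyB p) (of_real a)) powr r / norm (den a) powr r
                              * Ij p t a r powr r * Ij p t a r' powr r)"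
    have \<Sigma>0: "\<Sigma> \<ge> 0" unfolding \<Sigma>_def by (auto intro!: sum_nonneg)
    have "(\<Sum>a\<in>R. norm (poly Q (of_real a)) powr r / norm (den a) powr r * Ij p t a r powr r) powr (1 / r)
        \<le> (N powr r * \<Sigma>) powr (1 / r)"
      using le r0 unfolding \<Sigma>_def by (intro powr_mono2) (auto intro!: sum_nonneg)
    also have "\<dots> = N * \<Sigma> powr (1 / r)" using N0 \<Sigma>0 r0 by (simp add: powr_mult powr_powr)
    finally show ?thesis unfolding N_def \<Sigma>_def .
  qed
  show ?thesis using first second unfolding f_def c_def den_def R_def by simp
qed

end
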